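(* Let $n\ge 1$ and $r\ge 1$ be integers, and consider a two-sided matching problem with a set $\mathcal{M}$ of $n$ men and a set $\mathcal{W}$ of $n+r$ women, in which each man's preference list is an independent uniformly random ordering of $\mathcal{W}$ and each woman's preference list is an independent uniformly random ordering of $\mathcal{M}$. For $x\in\mathcal{M}\cup\mathcal{W}$, let $N(x)$ be the number of stable partners of $x$. Then for every $x\in\mathcal{M}\cup\mathcal{W}$, $$\mathbb{P}\bigl(N(x)>1\bigr)\le\frac{1}{r+1}\quad\text{and}\quad\mathbb{E}\bigl(N(x)\bigr)\le 1+\frac{1}{r}.$$
   Context: Stable matchings are in the sense of Gale and Shapley (a matching pairs each man with at most one woman and vice versa; it is stable if no man and woman not matched together both strictly prefer each other to their assigned partners, being unmatched ranked below every partner). $y$ is a stable partner of $x$ if $x$ and $y$ are matched in some stable matching. *)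

theory Defs
  imports Complex_Main "HOL-Combinatorics.Multiset_Permutations"
begin

text \<open>Men are 0..<n, women are 0..<n+r. A preference list is a list (strict ranking,
  most preferred first) that is a permutation of the other side.\<close>

definition prefers :: "nat list \<Rightarrow> nat \<Rightarrow> nat \<Rightarrow> bool" where
  "prefers xs a b \<longleftrightarrow> (\<exists>i j. i < j \<and> j < length xs \<and> xs ! i = a \<and> xs ! j = b)"

definition matching :: "nat \<Rightarrow> nat \<Rightarrow> (nat \<times> nat) set \<Rightarrow> bool" where
  "matching n r \<mu> \<longleftrightarrow> \<mu> \<subseteq> {..<n} \<times> {..<n+r}
     \<and> (\<forall>m w w'. (m, w) \<in> \<mu> \<longrightarrow> (m, w') \<in> \<mu> \<longrightarrow> w = w')
     \<and> (\<forall>m m' w. (m, w) \<in> \<mu> \<longrightarrow> (m', w) \<in> \<mu> \<longrightarrow> m = m')"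

text \<open>Stability: no man m and woman w, not matched together, who both strictly prefer each
  other to their assigned partners (being unmatched is ranked below every partner).\<close>
definition stable :: "nat \<Rightarrow> nat \<Rightarrow> (nat \<Rightarrow> nat list) \<Rightarrow> (nat \<Rightarrow> nat list)
     \<Rightarrow> (nat \<times> nat) set \<Rightarrow> bool" where
  "stable n r PM PW \<mu> \<longleftrightarrow> matching n r \<mu> \<and>
     \<not> (\<exists>m<n. \<exists>w<n+r. (m, w) \<notin> \<mu>
          \<and> (\<forall>w'. (m, w') \<in> \<mu> \<longrightarrow> prefers (PM m) w w')
          \<and> (\<forall>m'. (m', w) \<in> \<mu> \<longrightarrow> prefers (PW w) m m'))"

definition stable_partners_man :: "nat \<Rightarrow> nat \<Rightarrow> (nat \<Rightarrow> nat list) \<Rightarrow> (nat \<Rightarrow> nat list)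
     \<Rightarrow> nat \<Rightarrow> nat set" where
  "stable_partners_man n r PM PW m = {w. \<exists>\<mu>. stable n r PM PW \<mu> \<and> (m, w) \<in> \<mu>}"

definition stable_partners_woman :: "nat \<Rightarrow> nat \<Rightarrow> (nat \<Rightarrow> nat list) \<Rightarrow> (nat \<Rightarrow> nat list)
     \<Rightarrow> nat \<Rightarrow> nat set" where
  "stable_partners_woman n r PM PW w = {m. \<exists>\<mu>. stable n r PM PW \<mu> \<and> (m, w) \<in> \<mu>}"

text \<open>The (finite) sample space of preference profiles; uniform measure = independent
  uniform random orderings for every person.\<close>
definition profiles :: "nat \<Rightarrow> nat \<Rightarrow> ((nat \<Rightarrow> nat list) \<times> (nat \<Rightarrow> nat list)) set" where
  "profiles n r = (PiE {..<n} (\<lambda>_. permutations_of_set {..<n+r}))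
                 \<times> (PiE {..<n+r} (\<lambda>_. permutations_of_set {..<n}))"

end

theory Submission
  imports Defs
begin


definition pos :: "nat list \<Rightarrow> nat \<Rightarrow> nat" where
  "pos xs a = (LEAST i. i < length xs \<and> xs ! i = a)"

lemma pos_ok:
  assumes "a \<in> set xs"
  shows "pos xs a < length xs \<and> xs ! pos xs a = a"
proof -
  obtain i where "i < length xs \<and> xs ! i = a" using assms by (auto simp: in_set_conv_nth)
  then have "(LEAST i. i < length xs \<and> xs ! i = a) < length xs \<and> xs ! (LEAST i. i < length xs \<and> xs ! i = a) = a"
    by (rule LeastI)
  then show ?thesis unfolding pos_def .
qed

lemma pos_nth:
  assumes "distinct xs" "i < length xs"
  shows "pos xs (xs ! i) = i"
proof -
  have "pos xs (xs!i) < length xs \<and> xs ! pos xs (xs!i) = xs!i" using pos_ok[of "xs!i" xs] assms by simp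
  then show ?thesis using assms nth_eq_iff_index_eq by blast
qed

lemma pos_inj:
  assumes "a \<in> set xs" "b \<in> set xs" "pos xs a = pos xs b"
  shows "a = b"
proof -
  have 1: "xs ! pos xs a = a" using pos_ok[OF assms(1)] by (rule conjunct2)
  have 2: "xs ! pos xs b = b" using pos_ok[OF assms(2)] by (rule conjunct2)
  show ?thesis using 1 2 assms(3) by metis
qed

lemma prefers_pos:
  assumes "distinct xs"
  shows "prefers xs a b \<longleftrightarrow> a \<in> set xs \<and> b \<in> set xs \<and> pos xs a < pos xs b"
proof
  assume "prefers xs a b"
  then obtain i j where ij: "i < j" "j < length xs" "xs ! i = a" "xs ! j = b"
    by (auto simp: prefers_def)
  have "pos xs a = i" "pos xs b = j" using pos_nth[OF assms] ij by auto
  moreover have "a \<in> set xs" "b \<in> set xs" using ij by auto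
  ultimately show "a \<in> set xs \<and> b \<in> set xs \<and> pos xs a < pos xs b" using ij by simp
next
  assume h: "a \<in> set xs \<and> b \<in> set xs \<and> pos xs a < pos xs b"
  then have "pos xs a < pos xs b \<and> pos xs b < length xs \<and> xs ! pos xs a = a \<and> xs ! pos xs b = b"
    using pos_ok[of a xs] pos_ok[of b xs] by auto
  then show "prefers xs a b" unfolding prefers_def by (intro exI[of _ "pos xs a"] exI[of _ "pos xs b"]) simp
qed

lemma prefers_total:
  assumes "distinct xs" "a \<in> set xs" "b \<in> set xs" "a \<noteq> b"
  shows "prefers xs a b \<or> prefers xs b a"
proof -
  have "pos xs a \<noteq> pos xs b" using pos_inj assms by blast
  then show ?thesis using prefers_pos[OF assms(1)] assms by auto
qed

lemma prefers_asym:
  assumes "distinct xs" "prefers xs a b"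
  shows "\<not> prefers xs b a"
  using assms prefers_pos by auto

lemma prefers_irrefl: "distinct xs \<Longrightarrow> \<not> prefers xs a a"
  using prefers_pos by auto

lemma prefers_trans:
  assumes "distinct xs" "prefers xs a b" "prefers xs b c"
  shows "prefers xs a c"
  using assms prefers_pos by auto

lemma in_take_Suc_pos:
  assumes "distinct xs" "a \<in> set xs"
  shows "a \<in> set (take (Suc q) xs) \<longleftrightarrow> pos xs a \<le> q"
proof
  assume "a \<in> set (take (Suc q) xs)"
  then obtain i where i1: "i < length (take (Suc q) xs)" and i2: "take (Suc q) xs ! i = a"
    by (auto simp: in_set_conv_nth)
  have i3: "i < Suc q" "i < length xs" using i1 by simp_all
  have i4: "xs ! i = a" using i2 i3(1) nth_take by metis
  have "pos xs a = i" using pos_nth[OF assms(1) i3(2)] i4 by simp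
  then show "pos xs a \<le> q" using i3 by simp
next
  assume h: "pos xs a \<le> q"
  have p: "pos xs a < length xs" "xs ! pos xs a = a" using pos_ok[OF assms(2)] by simp_all
  have "pos xs a < length (take (Suc q) xs)" using h p(1) by simp
  moreover have "take (Suc q) xs ! pos xs a = a" using h p(2) nth_take by (metis less_Suc_eq_le)
  ultimately show "a \<in> set (take (Suc q) xs)" by (metis nth_mem)
qed



locale mkt =
  fixes n r :: nat and PM PW :: "nat \<Rightarrow> nat list" and md :: bool and x0 :: nat
begin

definition tgt :: "(nat \<Rightarrow> nat) \<Rightarrow> nat \<Rightarrow> nat" where "tgt q j = PM j ! q j"
definition Pre :: "(nat \<Rightarrow> nat) \<Rightarrow> nat \<Rightarrow> nat set" where
  "Pre q j = set (take (Suc (q j)) (PM j))"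
definition R :: "(nat \<Rightarrow> nat) \<Rightarrow> nat \<Rightarrow> nat set" where "R q w = {j. j < n \<and> w \<in> Pre q j}"
definition rej :: "(nat \<Rightarrow> nat) \<Rightarrow> nat \<Rightarrow> bool" where
  "rej q j \<longleftrightarrow> (\<exists>i\<in>R q (tgt q j). prefers (PW (tgt q j)) i j)"
definition F :: "(nat \<Rightarrow> nat) \<Rightarrow> nat \<Rightarrow> nat" where
  "F q = (\<lambda>j. if j < n \<and> q j < n+r \<and> rej q j then Suc (q j) else q j)"
definition K :: nat where "K = Suc (n*(n+r))"
definition it :: "(nat \<Rightarrow> nat) \<Rightarrow> nat \<Rightarrow> nat" where "it q = (F ^^ K) q"
definition q0 :: "nat \<Rightarrow> nat" where "q0 = it (\<lambda>_. 0)"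
definition U :: "nat set" where "U = {w. w < n+r \<and> R q0 w = {}}"
definition dm :: "(nat \<Rightarrow> nat) \<Rightarrow> nat" where
  "dm q = (if md then x0 else if (\<exists>j<n. q j < n+r \<and> tgt q j = x0)
            then (LEAST j. j<n \<and> q j < n+r \<and> tgt q j = x0) else 0)"
definition dv :: "(nat \<Rightarrow> nat) \<Rightarrow> nat \<Rightarrow> nat" where "dv q = q(dm q := Suc (q (dm q)))"
primrec qs :: "nat \<Rightarrow> nat \<Rightarrow> nat" where
  "qs 0 = q0" | "qs (Suc k) = it (dv (qs k))"
definition xk :: "nat \<Rightarrow> nat" where "xk k = tgt (qs k) (dm (qs k))"
definition st :: "nat \<Rightarrow> nat \<Rightarrow> nat \<Rightarrow> nat" where "st k l = (F ^^ l) (dv (qs k))"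
definition Succ :: "nat \<Rightarrow> bool" where "Succ k \<longleftrightarrow> (\<forall>u\<in>U. R (qs (Suc k)) u = {})"
definition A :: "nat \<Rightarrow> bool" where "A k \<longleftrightarrow> (\<forall>i<k. Succ i)"
definition Hit :: "nat \<Rightarrow> nat \<Rightarrow> nat \<Rightarrow> bool" where
  "Hit k l j \<longleftrightarrow> l \<le> K \<and> j < n \<and> qs k j < st k l j \<and> st k l j < n+r
                  \<and> tgt (st k l) j \<in> insert (xk k) U"
definition tH :: "nat \<Rightarrow> nat" where "tH k = (LEAST l. \<exists>j. Hit k l j)"
definition jH :: "nat \<Rightarrow> nat" where "jH k = (LEAST j. Hit k (tH k) j)"
definition E :: "nat \<Rightarrow> bool" where
  "E k \<longleftrightarrow> (\<exists>l j. Hit k l j) \<and> tgt (st k (tH k)) (jH k) = xk k"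
definition below :: "(nat \<Rightarrow> nat) \<Rightarrow> (nat \<times> nat) set \<Rightarrow> bool" where
  "below q \<nu> \<longleftrightarrow> (\<forall>j<n. \<forall>w. (j,w) \<in> \<nu> \<longrightarrow> q j \<le> pos (PM j) w)"
definition stb :: "(nat \<times> nat) set \<Rightarrow> bool" where "stb \<nu> = stable n r PM PW \<nu>"

end

locale mkt_ok = mkt +
  assumes n1: "n \<ge> 1" and r1: "r \<ge> 1"
    and PMp: "\<forall>j<n. PM j \<in> permutations_of_set {..<n+r}"
    and PWp: "\<forall>w<n+r. PW w \<in> permutations_of_set {..<n}"
    and mdx: "md \<longrightarrow> x0 < n"
begin

lemma PM_dist: "j < n \<Longrightarrow> distinct (PM j)" using PMp permutations_of_setD by blast
lemma PM_set: "j < n \<Longrightarrow> set (PM j) = {..<n+r}" using PMp permutations_of_setD by blast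
lemma PM_len: "j < n \<Longrightarrow> length (PM j) = n+r"
  using PM_dist PM_set distinct_card by fastforce
lemma PW_dist: "w < n+r \<Longrightarrow> distinct (PW w)" using PWp permutations_of_setD by blast
lemma PW_set: "w < n+r \<Longrightarrow> set (PW w) = {..<n}" using PWp permutations_of_setD by blast

lemma tgt_lt: "j < n \<Longrightarrow> q j < n+r \<Longrightarrow> tgt q j < n+r"
proof -
  assume a: "j < n" "q j < n+r"
  then have "PM j ! q j \<in> set (PM j)" using PM_len[OF a(1)] by simp
  then show ?thesis unfolding tgt_def using PM_set[OF a(1)] by simp
qed

lemma pos_tgt: "j < n \<Longrightarrow> q j < n+r \<Longrightarrow> pos (PM j) (tgt q j) = q j"
  unfolding tgt_def using PM_len PM_dist pos_nth by metis

lemma Pre_iff: "j < n \<Longrightarrow> w < n+r \<Longrightarrow> w \<in> Pre q j \<longleftrightarrow> pos (PM j) w \<le> q j"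
proof -
  assume a: "j < n" "w < n+r"
  then have "w \<in> set (PM j)" using PM_set[OF a(1)] by simp
  then show ?thesis unfolding Pre_def by (rule in_take_Suc_pos[OF PM_dist[OF a(1)]])
qed

lemma Pre_sub: "j < n \<Longrightarrow> Pre q j \<subseteq> {..<n+r}"
  unfolding Pre_def using set_take_subset[of "Suc (q j)" "PM j"] PM_set[of j] by simp

lemma tgt_Pre: "j < n \<Longrightarrow> q j < n+r \<Longrightarrow> tgt q j \<in> Pre q j"
  using Pre_iff[of j "tgt q j" q] pos_tgt[of j q] tgt_lt[of j q] by simp

lemma Pre_mono: "j < n \<Longrightarrow> q j \<le> q' j \<Longrightarrow> Pre q j \<subseteq> Pre q' j"
  unfolding Pre_def by (intro set_take_subset_set_take) simp

lemma R_mono: "(\<And>j. j < n \<Longrightarrow> q j \<le> q' j) \<Longrightarrow> R q w \<subseteq> R q' w"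
proof
  fix i assume h: "\<And>j. j < n \<Longrightarrow> q j \<le> q' j" and i: "i \<in> R q w"
  then have "i < n" "w \<in> Pre q i" unfolding R_def by auto
  then show "i \<in> R q' w" using Pre_mono[of i q q'] h[of i] unfolding R_def by auto
qed

lemma pos_lt: "j < n \<Longrightarrow> w < n+r \<Longrightarrow> pos (PM j) w < n+r"
proof -
  assume a: "j < n" "w < n+r"
  then have "w \<in> set (PM j)" using PM_set[OF a(1)] by simp
  then show ?thesis using pos_ok[of w "PM j"] PM_len[OF a(1)] by simp
qed

lemma nth_pos: "j < n \<Longrightarrow> w < n+r \<Longrightarrow> PM j ! pos (PM j) w = w"
proof -
  assume a: "j < n" "w < n+r"
  then have "w \<in> set (PM j)" using PM_set[OF a(1)] by simp
  then show ?thesis using pos_ok[of w "PM j"] by simp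
qed

lemma F_ge: "q j \<le> F q j" unfolding F_def by simp
lemma F_le: "F q j \<le> Suc (q j)" unfolding F_def by simp
lemma F_out: "j \<ge> n \<Longrightarrow> F q j = q j" unfolding F_def by simp
lemma F_bound: "q j \<le> n+r \<Longrightarrow> F q j \<le> n+r" unfolding F_def by simp

lemma Fpow_mono: "l \<le> l' \<Longrightarrow> (F ^^ l) q j \<le> (F ^^ l') q j"
proof (induction l' arbitrary: l)
  case 0 then show ?case by simp
next
  case (Suc l')
  show ?case
  proof (cases "l = Suc l'")
    case True then show ?thesis by simp
  next
    case False
    then have "(F ^^ l) q j \<le> (F ^^ l') q j" using Suc by simp
    also have "\<dots> \<le> (F ^^ Suc l') q j" using F_ge by simp
    finally show ?thesis .
  qed
qed

lemma Fpow_ge: "q j \<le> (F ^^ l) q j" using Fpow_mono[of 0 l] by simp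

lemma Fpow_bound: "q j \<le> n+r \<Longrightarrow> (F ^^ l) q j \<le> n+r"
  by (induction l) (auto intro: F_bound)

lemma Fpow_out: "j \<ge> n \<Longrightarrow> (F ^^ l) q j = q j"
  by (induction l) (auto simp: F_out)

definition Sm :: "(nat \<Rightarrow> nat) \<Rightarrow> nat" where "Sm q = (\<Sum>j<n. q j)"

lemma F_strict:
  assumes "F q \<noteq> q"
  shows "Sm q < Sm (F q)"
proof -
  obtain j where j: "F q j \<noteq> q j" using assms by blast
  then have "j < n" using F_out by (metis not_le)
  have "q j < F q j" using j F_ge[of q j] by simp
  then show ?thesis unfolding Sm_def
    using \<open>j < n\<close> F_ge by (intro sum_strict_mono_ex1) auto
qed

lemma Sm_bound: "(\<And>j. j < n \<Longrightarrow> q j \<le> n+r) \<Longrightarrow> Sm q \<le> n*(n+r)"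
  unfolding Sm_def using sum_bounded_above[of "{..<n}" q "n+r"] by (simp add: mult.commute)

lemma funpow_stable:
  assumes "(F ^^ Suc l) q = (F ^^ l) q"
  shows "(F ^^ (m + l)) q = (F ^^ l) q"
proof (induction m)
  case 0 then show ?case by simp
next
  case (Suc m)
  have "(F ^^ (Suc m + l)) q = F ((F ^^ (m + l)) q)" by simp
  also have "\<dots> = F ((F ^^ l) q)" using Suc by simp
  also have "\<dots> = (F ^^ l) q" using assms by simp
  finally show ?case .
qed

lemma it_fix:
  assumes "\<And>j. j < n \<Longrightarrow> q j \<le> n+r"
  shows "F (it q) = it q"
proof (rule ccontr)
  assume nf: "F (it q) \<noteq> it q"
  have stuck: "(F ^^ Suc l) q \<noteq> (F ^^ l) q" if "l \<le> K" for l
  proof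
    assume eq: "(F ^^ Suc l) q = (F ^^ l) q"
    have 1: "(F ^^ K) q = (F ^^ l) q"
      using funpow_stable[OF eq, of "K - l"] that by simp
    have 2: "(F ^^ Suc K) q = (F ^^ l) q"
      using funpow_stable[OF eq, of "Suc K - l"] that by simp
    have "F (it q) = it q" unfolding it_def using 1 2 by simp
    then show False using nf by simp
  qed
  have cnt: "l \<le> Sm ((F ^^ l) q)" if "l \<le> Suc K" for l
    using that
  proof (induction l)
    case 0 then show ?case by simp
  next
    case (Suc l)
    have "(F ^^ Suc l) q \<noteq> (F ^^ l) q" using stuck Suc.prems by simp
    then have "F ((F ^^ l) q) \<noteq> (F ^^ l) q" by simp
    then have "Sm ((F ^^ l) q) < Sm (F ((F ^^ l) q))" by (rule F_strict)
    then show ?case using Suc by simp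
  qed
  have "Suc K \<le> Sm ((F ^^ Suc K) q)" by (rule cnt[OF order_refl])
  moreover have "Sm ((F ^^ Suc K) q) \<le> n*(n+r)"
    by (rule Sm_bound) (rule Fpow_bound, rule assms)
  ultimately show False unfolding K_def by simp
qed

end


context mkt_ok begin

lemma stb_match: "stb \<nu> \<Longrightarrow> matching n r \<nu>" unfolding stb_def stable_def by simp

lemma stb_range: "stb \<nu> \<Longrightarrow> (j,w) \<in> \<nu> \<Longrightarrow> j < n \<and> w < n+r"
  using stb_match unfolding matching_def by blast

lemma stb_uw: "stb \<nu> \<Longrightarrow> (j,w) \<in> \<nu> \<Longrightarrow> (j,w') \<in> \<nu> \<Longrightarrow> w = w'"
  using stb_match unfolding matching_def by blast

lemma stb_um: "stb \<nu> \<Longrightarrow> (j,w) \<in> \<nu> \<Longrightarrow> (j',w) \<in> \<nu> \<Longrightarrow> j = j'"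
  using stb_match unfolding matching_def by blast

lemma stb_noblock:
  assumes "stb \<nu>" "j < n" "w < n+r" "(j,w) \<notin> \<nu>"
    "\<And>w'. (j,w') \<in> \<nu> \<Longrightarrow> prefers (PM j) w w'"
    "\<And>m'. (m',w) \<in> \<nu> \<Longrightarrow> prefers (PW w) j m'"
  shows False
  using assms unfolding stb_def stable_def by blast

lemma stb_finite: "stb \<nu> \<Longrightarrow> finite \<nu>"
proof -
  assume "stb \<nu>"
  then have "\<nu> \<subseteq> {..<n} \<times> {..<n+r}" using stb_match unfolding matching_def by blast
  then show ?thesis using finite_subset by blast
qed

lemma stb_inj_fst: "stb \<nu> \<Longrightarrow> inj_on fst \<nu>"
  unfolding inj_on_def using stb_uw by fastforce

lemma stb_inj_snd: "stb \<nu> \<Longrightarrow> inj_on snd \<nu>"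
  unfolding inj_on_def using stb_um by fastforce

lemma stb_card: "stb \<nu> \<Longrightarrow> card (snd ` \<nu>) = card (fst ` \<nu>)"
  using stb_inj_fst stb_inj_snd card_image by metis

lemma stb_fst_sub: "stb \<nu> \<Longrightarrow> fst ` \<nu> \<subseteq> {..<n}"
  using stb_range by fastforce

lemma stb_snd_sub: "stb \<nu> \<Longrightarrow> snd ` \<nu> \<subseteq> {..<n+r}"
  using stb_range by fastforce

lemma allmatched:
  assumes "stb \<nu>" "j < n"
  shows "\<exists>w. (j,w) \<in> \<nu>"
proof (rule ccontr)
  assume nm: "\<not> (\<exists>w. (j,w) \<in> \<nu>)"
  have "fst ` \<nu> \<subseteq> {..<n} - {j}" using stb_fst_sub[OF assms(1)] nm by force
  then have "card (fst ` \<nu>) \<le> n - 1"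
    by (metis card_Diff_singleton card_lessThan card_mono finite_Diff finite_lessThan assms(2) lessThan_iff)
  then have "card (snd ` \<nu>) < card {..<n+r}" using stb_card[OF assms(1)] assms(2) by simp
  then have "\<not> {..<n+r} \<subseteq> snd ` \<nu>"
    using card_mono[of "snd ` \<nu>"] stb_finite[OF assms(1)] by (meson finite_imageI not_le)
  then obtain w where w: "w < n+r" "w \<notin> snd ` \<nu>" by auto
  have "\<And>m'. (m',w) \<notin> \<nu>" using w(2) by force
  then show False
    using stb_noblock[OF assms(1) assms(2) w(1)] nm by blast
qed

lemma below_F:
  assumes "stb \<nu>" "below q \<nu>"
  shows "below (F q) \<nu>"
  unfolding below_def
proof (intro allI impI)
  fix j w assume j: "j < n" and jw: "(j,w) \<in> \<nu>"
  have w: "w < n+r" using stb_range[OF assms(1) jw] by simp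
  have qle: "q j \<le> pos (PM j) w" using assms(2) j jw unfolding below_def by blast
  show "F q j \<le> pos (PM j) w"
  proof (rule ccontr)
    assume "\<not> F q j \<le> pos (PM j) w"
    then have c: "F q j = Suc (q j)" "q j = pos (PM j) w" "q j < n+r" "rej q j"
      using qle F_le[of q j] unfolding F_def by (auto split: if_splits)
    have tg: "tgt q j = w" unfolding tgt_def using c(2) nth_pos[OF j w] by simp
    obtain i where i: "i \<in> R q w" "prefers (PW w) i j" using c(4) tg unfolding rej_def by auto
    have i1: "i < n" "w \<in> Pre q i" using i(1) unfolding R_def by auto
    have i2: "pos (PM i) w \<le> q i" using Pre_iff[OF i1(1) w] i1(2) by simp
    obtain w' where w': "(i,w') \<in> \<nu>" using allmatched[OF assms(1) i1(1)] by blast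
    have w'r: "w' < n+r" using stb_range[OF assms(1) w'] by simp
    have i3: "q i \<le> pos (PM i) w'" using assms(2) i1(1) w' unfolding below_def by blast
    have ij: "i \<noteq> j" using i(2) prefers_irrefl[OF PW_dist[OF w]] by blast
    have ww': "w' \<noteq> w" using stb_um[OF assms(1) jw] w' ij by blast
    have "pos (PM i) w \<noteq> pos (PM i) w'"
      using pos_inj[of w "PM i" w'] PM_set[OF i1(1)] w w'r ww' by auto
    then have "pos (PM i) w < pos (PM i) w'" using i2 i3 by simp
    then have pr: "prefers (PM i) w w'"
      using prefers_pos[OF PM_dist[OF i1(1)]] PM_set[OF i1(1)] w w'r by simp
    have niw: "(i,w) \<notin> \<nu>" using stb_uw[OF assms(1) w'] ww' by blast
    show False
    proof (rule stb_noblock[OF assms(1) i1(1) w niw])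
      fix w'' assume "(i,w'') \<in> \<nu>"
      then have "w'' = w'" using stb_uw[OF assms(1) w'] by simp
      then show "prefers (PM i) w w''" using pr by simp
    next
      fix m' assume "(m',w) \<in> \<nu>"
      then have "m' = j" using stb_um[OF assms(1) jw] by simp
      then show "prefers (PW w) i m'" using i(2) by simp
    qed
  qed
qed

lemma below_Fpow: "stb \<nu> \<Longrightarrow> below q \<nu> \<Longrightarrow> below ((F ^^ l) q) \<nu>"
  by (induction l) (auto intro: below_F)

lemma below_it: "stb \<nu> \<Longrightarrow> below q \<nu> \<Longrightarrow> below (it q) \<nu>"
  unfolding it_def by (rule below_Fpow)

lemma best_ex:
  assumes "w < n+r" "S \<subseteq> {..<n}" "S \<noteq> {}"
  shows "\<exists>b\<in>S. \<forall>i\<in>S. i \<noteq> b \<longrightarrow> prefers (PW w) b i"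
proof -
  have fin: "finite S" using assms(2) finite_subset by blast
  let ?m = "Min (pos (PW w) ` S)"
  have "?m \<in> pos (PW w) ` S" using fin assms(3) by simp
  then obtain b where b: "b \<in> S" "pos (PW w) b = ?m" by auto
  have "\<forall>i\<in>S. i \<noteq> b \<longrightarrow> prefers (PW w) b i"
  proof (intro ballI impI)
    fix i assume i: "i \<in> S" "i \<noteq> b"
    have "pos (PW w) b \<le> pos (PW w) i" using b fin i by simp
    moreover have "b \<in> set (PW w)" "i \<in> set (PW w)" using b(1) i(1) assms(2) PW_set[OF assms(1)] by auto
    moreover have "pos (PW w) b \<noteq> pos (PW w) i" using pos_inj calculation i(2) by metis
    ultimately show "prefers (PW w) b i" using prefers_pos[OF PW_dist[OF assms(1)]] by simp
  qed
  then show ?thesis using b(1) by blast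
qed

lemma R_sub: "R q w \<subseteq> {..<n}" unfolding R_def by auto

lemma best_notrej:
  assumes "j < n" "\<forall>i\<in>R q (tgt q j). i \<noteq> j \<longrightarrow> prefers (PW (tgt q j)) j i" "q j < n+r"
  shows "\<not> rej q j"
proof
  assume "rej q j"
  then obtain i where i: "i \<in> R q (tgt q j)" "prefers (PW (tgt q j)) i j" unfolding rej_def by auto
  have d: "distinct (PW (tgt q j))" using PW_dist tgt_lt assms by blast
  have "i \<noteq> j" using i(2) prefers_irrefl[OF d] by blast
  then have "prefers (PW (tgt q j)) j i" using assms(2) i(1) by blast
  then show False using prefers_asym[OF d] i(2) by blast
qed

lemma notrej_best:
  assumes "j < n" "q j < n+r" "\<not> rej q j" "i \<in> R q (tgt q j)" "i \<noteq> j"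
  shows "prefers (PW (tgt q j)) j i"
proof -
  have w: "tgt q j < n+r" using tgt_lt assms by blast
  have "i \<in> set (PW (tgt q j))" "j \<in> set (PW (tgt q j))"
    using assms(1,4) PW_set[OF w] R_sub by auto
  then have "prefers (PW (tgt q j)) j i \<or> prefers (PW (tgt q j)) i j"
    using prefers_total[OF PW_dist[OF w]] assms(5) by blast
  then show ?thesis using assms(3,4) unfolding rej_def by blast
qed

definition Good :: "(nat \<Rightarrow> nat) \<Rightarrow> bool" where
  "Good q \<longleftrightarrow> (\<forall>w<n+r. R q w \<noteq> {} \<longrightarrow> (\<exists>j<n. q j < n+r \<and> tgt q j = w \<and> \<not> rej q j))"

definition Inv0 :: "(nat \<Rightarrow> nat) \<Rightarrow> bool" where
  "Inv0 q \<longleftrightarrow> (\<forall>j<n. q j < n+r) \<and> Good q"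

lemma inv_ptr:
  assumes "Inv0 q" "j < n"
  shows "F q j < n+r"
proof (rule ccontr)
  assume "\<not> F q j < n+r"
  moreover have "q j < n+r" using assms unfolding Inv0_def by blast
  ultimately have c: "F q j = Suc (q j)" "rej q j" "Suc (q j) = n+r"
    using F_le[of q j] unfolding F_def by (auto split: if_splits)
  let ?T = "{t. t < n \<and> q t < n+r \<and> \<not> rej q t}"
  have "{..<n+r} \<subseteq> tgt q ` ?T"
  proof
    fix w assume "w \<in> {..<n+r}"
    then have w: "w < n+r" by simp
    have "j \<in> R q w" unfolding R_def using Pre_iff[OF assms(2) w] pos_lt[OF assms(2) w] c(3) assms(2) by simp
    then obtain t where "t < n" "q t < n+r" "tgt q t = w" "\<not> rej q t"
      using assms(1) w unfolding Inv0_def Good_def by blast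
    then show "w \<in> tgt q ` ?T" by blast
  qed
  moreover have "?T \<subseteq> {..<n} - {j}" using c(2) by auto
  ultimately have sub2: "{..<n+r} \<subseteq> tgt q ` ?T" "?T \<subseteq> {..<n} - {j}" by simp_all
  have finT: "finite ?T" by simp
  have "card {..<n+r} \<le> card (tgt q ` ?T)" using sub2(1) finT by (intro card_mono) auto
  also have "\<dots> \<le> card ?T" using finT by (rule card_image_le)
  also have "\<dots> \<le> card ({..<n} - {j})" using \<open>?T \<subseteq> _\<close> by (intro card_mono) auto
  also have "\<dots> = n - 1" using assms(2) by simp
  finally show False using r1 by simp
qed

lemma newly:
  assumes "i < n" "w < n+r" "w \<in> Pre (F q) i" "w \<notin> Pre q i"
  shows "F q i = Suc (q i) \<and> tgt (F q) i = w"
proof -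
  have "pos (PM i) w \<le> F q i" "\<not> pos (PM i) w \<le> q i"
    using Pre_iff[OF assms(1,2)] assms(3,4) by auto
  then have "pos (PM i) w = Suc (q i)" "F q i = Suc (q i)" using F_le[of q i] by auto
  then show ?thesis unfolding tgt_def using nth_pos[OF assms(1,2)] by simp
qed

lemma inv_good:
  assumes "Inv0 q"
  shows "Good (F q)"
  unfolding Good_def
proof (intro allI impI)
  fix w assume w: "w < n+r" and ne: "R (F q) w \<noteq> {}"
  obtain b where b: "b \<in> R (F q) w" "\<forall>i\<in>R (F q) w. i \<noteq> b \<longrightarrow> prefers (PW w) b i"
    using best_ex[OF w R_sub ne] by blast
  have b1: "b < n" "w \<in> Pre (F q) b" using b(1) unfolding R_def by auto
  have ptr: "F q b < n+r" using inv_ptr[OF assms b1(1)] .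
  have tg: "tgt (F q) b = w"
  proof (cases "w \<in> Pre q b")
    case False
    then show ?thesis using newly[OF b1(1) w b1(2)] by simp
  next
    case True
    then have "b \<in> R q w" using b1 unfolding R_def by simp
    then obtain t where t: "t < n" "q t < n+r" "tgt q t = w" "\<not> rej q t"
      using assms w unfolding Inv0_def Good_def by blast
    have tR: "t \<in> R q w" using tgt_Pre[of t q, OF t(1,2)] t(1,3) unfolding R_def by simp
    have sub: "R q w \<subseteq> R (F q) w" by (rule R_mono) (rule F_ge)
    have "t = b"
    proof (rule ccontr)
      assume "t \<noteq> b"
      then have "prefers (PW w) b t" using b(2) tR sub by blast
      then have "rej q t" using \<open>b \<in> R q w\<close> t(3) unfolding rej_def by blast
      then show False using t(4) by simp
    qed
    then have "F q b = q b" using t unfolding F_def by simp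
    then show ?thesis using t \<open>t = b\<close> unfolding tgt_def by simp
  qed
  have "\<not> rej (F q) b" using best_notrej[of b "F q", OF b1(1) _ ptr] b(2) tg by simp
  then show "\<exists>j<n. F q j < n+r \<and> tgt (F q) j = w \<and> \<not> rej (F q) j" using b1(1) ptr tg by blast
qed

lemma inv_F: "Inv0 q \<Longrightarrow> Inv0 (F q)"
  using inv_ptr inv_good unfolding Inv0_def by blast

lemma inv_start: "Inv0 (\<lambda>_. 0)"
  unfolding Inv0_def Good_def
proof (intro conjI allI impI)
  fix j :: nat assume "j < n" then show "(0::nat) < n+r" by simp
next
  fix w assume w: "w < n+r" and ne: "R (\<lambda>_. 0) w \<noteq> {}"
  obtain b where b: "b \<in> R (\<lambda>_. 0) w" "\<forall>i\<in>R (\<lambda>_. 0) w. i \<noteq> b \<longrightarrow> prefers (PW w) b i"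
    using best_ex[OF w R_sub ne] by blast
  have b1: "b < n" "w \<in> Pre (\<lambda>_. 0) b" using b(1) unfolding R_def by auto
  have "pos (PM b) w = 0" using Pre_iff[OF b1(1) w] b1(2) by simp
  then have tg: "tgt (\<lambda>_. 0) b = w" unfolding tgt_def using nth_pos[OF b1(1) w] by simp
  have "\<not> rej (\<lambda>_. 0) b" using best_notrej[of b "\<lambda>_. 0", OF b1(1)] b(2) tg n1 by simp
  then show "\<exists>j<n. (0::nat) < n+r \<and> tgt (\<lambda>_. 0) j = w \<and> \<not> rej (\<lambda>_. 0) j"
    using b1(1) tg by auto
qed

lemma inv_q0: "Inv0 q0"
proof -
  have "Inv0 ((F ^^ l) (\<lambda>_. 0))" for l by (induction l) (auto simp: inv_start inv_F)
  then show ?thesis unfolding q0_def it_def by simp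
qed

lemma q0_fix: "F q0 = q0" unfolding q0_def by (rule it_fix) simp

lemma q0_lt: "j < n \<Longrightarrow> q0 j < n+r" using inv_q0 unfolding Inv0_def by blast

lemma fix_notrej: "F q = q \<Longrightarrow> j < n \<Longrightarrow> q j < n+r \<Longrightarrow> \<not> rej q j"
  by (metis F_def n_not_Suc_n)

lemma tgt_inj:
  assumes "F q = q" "\<forall>j<n. q j < n+r"
  shows "inj_on (tgt q) {..<n}"
proof (rule inj_onI)
  fix j j' assume j: "j \<in> {..<n}" and j': "j' \<in> {..<n}" and eq: "tgt q j = tgt q j'"
  show "j = j'"
  proof (rule ccontr)
    assume ne: "j \<noteq> j'"
    have "j' \<in> R q (tgt q j)" using tgt_Pre[of j' q] j' assms(2) eq unfolding R_def by simp
    then have "prefers (PW (tgt q j)) j j'"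
      using notrej_best[of j q j'] fix_notrej[OF assms(1)] j assms(2) ne by simp
    moreover have "j \<in> R q (tgt q j')" using tgt_Pre[of j q] j assms(2) eq unfolding R_def by simp
    then have "prefers (PW (tgt q j')) j' j"
      using notrej_best[of j' q j] fix_notrej[OF assms(1)] j' assms(2) ne by simp
    ultimately show False using eq prefers_asym PW_dist tgt_lt j assms(2) by (metis lessThan_iff)
  qed
qed

lemma U_sub: "U \<subseteq> {..<n+r}" unfolding U_def by auto

lemma U_notgt: "u \<in> U \<Longrightarrow> j < n \<Longrightarrow> tgt q0 j \<noteq> u"
  using tgt_Pre[of j q0] q0_lt unfolding U_def R_def by auto

lemma nonU_tgt: "w < n+r \<Longrightarrow> w \<notin> U \<Longrightarrow> \<exists>j<n. tgt q0 j = w"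
  using inv_q0 unfolding Inv0_def Good_def U_def by blast

lemma tgt_img: "tgt q0 ` {..<n} = {..<n+r} - U"
proof
  show "tgt q0 ` {..<n} \<subseteq> {..<n+r} - U" using U_notgt tgt_lt q0_lt by blast
  show "{..<n+r} - U \<subseteq> tgt q0 ` {..<n}" using nonU_tgt by blast
qed

lemma card_nonU: "card ({..<n+r} - U) = n"
  using tgt_img card_image[OF tgt_inj[OF q0_fix]] q0_lt by (metis card_lessThan)

lemma card_U: "card U = r"
proof -
  have "card ({..<n+r} - U) = n+r - card U" using U_sub by (simp add: card_Diff_subset finite_subset)
  moreover have "card U \<le> n+r" using card_mono[OF finite_lessThan U_sub] by simp
  ultimately show ?thesis using card_nonU by simp
qed

lemma below_q0: "stb \<nu> \<Longrightarrow> below q0 \<nu>"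
  unfolding q0_def by (rule below_it) (auto simp: below_def)

lemma matched_nonU:
  assumes "stb \<nu>" "w < n+r" "w \<notin> U"
  shows "\<exists>i. (i,w) \<in> \<nu>"
proof (rule ccontr)
  assume nm: "\<not> (\<exists>i. (i,w) \<in> \<nu>)"
  obtain j where j: "j < n" "tgt q0 j = w" using nonU_tgt assms(2,3) by blast
  obtain w' where w': "(j,w') \<in> \<nu>" using allmatched[OF assms(1) j(1)] by blast
  have w'r: "w' < n+r" using stb_range[OF assms(1) w'] by simp
  have ww: "w' \<noteq> w" using nm w' by blast
  have "q0 j \<le> pos (PM j) w'" using below_q0[OF assms(1)] j(1) w' unfolding below_def by blast
  moreover have "pos (PM j) w = q0 j" using pos_tgt[of j q0, OF j(1) q0_lt[OF j(1)]] j(2) by simp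
  moreover have "pos (PM j) w \<noteq> pos (PM j) w'"
    using pos_inj[of w "PM j" w'] PM_set[OF j(1)] assms(2) w'r ww by auto
  ultimately have "pos (PM j) w < pos (PM j) w'" by simp
  then have pr: "prefers (PM j) w w'"
    using prefers_pos[OF PM_dist[OF j(1)]] PM_set[OF j(1)] assms(2) w'r by simp
  show False
  proof (rule stb_noblock[OF assms(1) j(1) assms(2)])
    show "(j,w) \<notin> \<nu>" using nm by blast
    fix w'' assume "(j,w'') \<in> \<nu>" then show "prefers (PM j) w w''" using stb_uw[OF assms(1) w'] pr by simp
  next
    fix m' assume "(m',w) \<in> \<nu>" then show "prefers (PW w) j m'" using nm by blast
  qed
qed

lemma U_unmatched:
  assumes "stb \<nu>" "u \<in> U"
  shows "(i,u) \<notin> \<nu>"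
proof -
  have sub: "{..<n+r} - U \<subseteq> snd ` \<nu>" using matched_nonU[OF assms(1)] by force
  have "card (snd ` \<nu>) \<le> n" using stb_card[OF assms(1)] stb_fst_sub[OF assms(1)]
    by (metis card_lessThan card_mono finite_lessThan)
  moreover have fin: "finite (snd ` \<nu>)" using stb_finite[OF assms(1)] by simp
  ultimately have "snd ` \<nu> = {..<n+r} - U" using sub card_nonU card_seteq by metis
  then show ?thesis using assms(2) by force
qed

lemma U_below:
  assumes "stb \<nu>" "(j,w) \<in> \<nu>" "u \<in> U"
  shows "pos (PM j) w < pos (PM j) u"
proof (rule ccontr)
  assume nlt: "\<not> pos (PM j) w < pos (PM j) u"
  have jw: "j < n" "w < n+r" using stb_range[OF assms(1,2)] by auto
  have u: "u < n+r" using assms(3) U_sub by auto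
  have "u \<noteq> w" using U_unmatched[OF assms(1,3)] assms(2) by blast
  then have "pos (PM j) u \<noteq> pos (PM j) w" using pos_inj[of u "PM j" w] PM_set[OF jw(1)] u jw by auto
  then have "pos (PM j) u < pos (PM j) w" using nlt by simp
  then have pr: "prefers (PM j) u w"
    using prefers_pos[OF PM_dist[OF jw(1)]] PM_set[OF jw(1)] u jw by simp
  show False
  proof (rule stb_noblock[OF assms(1) jw(1) u])
    show "(j,u) \<notin> \<nu>" using U_unmatched[OF assms(1,3)] by blast
    fix w'' assume "(j,w'') \<in> \<nu>" then show "prefers (PM j) u w''" using stb_uw[OF assms(1,2)] pr by simp
  next
    fix m' assume "(m',u) \<in> \<nu>" then show "prefers (PW u) j m'" using U_unmatched[OF assms(1,3)] by blast
  qed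
qed

lemma R_U_empty:
  assumes "stb \<nu>" "below q \<nu>" "u \<in> U"
  shows "R q u = {}"
proof (rule ccontr)
  assume "R q u \<noteq> {}"
  then obtain j where j: "j < n" "u \<in> Pre q j" unfolding R_def by auto
  have u: "u < n+r" using assms(3) U_sub by auto
  have "pos (PM j) u \<le> q j" using Pre_iff[OF j(1) u] j(2) by simp
  obtain w where w: "(j,w) \<in> \<nu>" using allmatched[OF assms(1) j(1)] by blast
  have "q j \<le> pos (PM j) w" using assms(2) j(1) w unfolding below_def by blast
  moreover have "pos (PM j) w < pos (PM j) u" using U_below[OF assms(1) w assms(3)] .
  ultimately show False using \<open>pos (PM j) u \<le> q j\<close> by simp
qed

end


context mkt_ok begin

lemma dm_lt: "dm q < n"
proof (cases md)
  case True then show ?thesis using mdx unfolding dm_def by simp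
next
  case False
  show ?thesis
  proof (cases "\<exists>j<n. q j < n+r \<and> tgt q j = x0")
    case True
    then have "(LEAST j. j<n \<and> q j < n+r \<and> tgt q j = x0) < n"
      using LeastI_ex[where P="\<lambda>j. j<n \<and> q j < n+r \<and> tgt q j = x0"] by blast
    then show ?thesis using False True unfolding dm_def by simp
  next
    case F2: False
    have "dm q = 0" using False F2 unfolding dm_def by (simp only: if_False if_True)
    then show ?thesis using n1 by simp
  qed
qed

lemma dm_man: "md \<Longrightarrow> dm q = x0" unfolding dm_def by simp

lemma dm_tgt:
  assumes "\<not> md" "\<exists>j<n. q j < n+r \<and> tgt q j = x0"
  shows "q (dm q) < n+r \<and> tgt q (dm q) = x0"
proof -
  have "(LEAST j. j<n \<and> q j < n+r \<and> tgt q j = x0) < n \<and> q (LEAST j. j<n \<and> q j < n+r \<and> tgt q j = x0) < n+r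
     \<and> tgt q (LEAST j. j<n \<and> q j < n+r \<and> tgt q j = x0) = x0"
    using LeastI_ex[where P="\<lambda>j. j<n \<and> q j < n+r \<and> tgt q j = x0"] assms(2) by blast
  then show ?thesis using assms unfolding dm_def by simp
qed

lemma dv_ge: "q j \<le> dv q j" unfolding dv_def by simp
lemma dv_le: "dv q j \<le> Suc (q j)" unfolding dv_def by simp
lemma dv_dm: "dv q (dm q) = Suc (q (dm q))" unfolding dv_def by simp
lemma dv_other: "j \<noteq> dm q \<Longrightarrow> dv q j = q j" unfolding dv_def by simp

lemma below_dv:
  assumes "below q \<nu>" "\<And>w. (dm q, w) \<in> \<nu> \<Longrightarrow> pos (PM (dm q)) w \<noteq> q (dm q)"
  shows "below (dv q) \<nu>"
  unfolding below_def
proof (intro allI impI)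
  fix j w assume j: "j < n" "(j,w) \<in> \<nu>"
  have le: "q j \<le> pos (PM j) w" using assms(1) j unfolding below_def by blast
  show "dv q j \<le> pos (PM j) w"
  proof (cases "j = dm q")
    case True
    then have "pos (PM j) w \<noteq> q j" using assms(2) j(2) by simp
    then show ?thesis using le True dv_dm[of q] by simp
  next
    case False then show ?thesis using le dv_other[OF False] by simp
  qed
qed

lemma G:
  assumes "stb \<nu>" "below (qs k) \<nu>"
    "\<And>w. (dm (qs k), w) \<in> \<nu> \<Longrightarrow> pos (PM (dm (qs k))) w \<noteq> qs k (dm (qs k))"
  shows "below (qs (Suc k)) \<nu> \<and> Succ k"
proof -
  have b: "below (qs (Suc k)) \<nu>" using below_it[OF assms(1) below_dv[OF assms(2,3)]] by simp
  then show ?thesis unfolding Succ_def using R_U_empty[OF assms(1) b] by blast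
qed

lemma qs_step: "qs k j \<le> qs (Suc k) j"
proof -
  have "qs k j \<le> dv (qs k) j" by (rule dv_ge)
  also have "\<dots> \<le> it (dv (qs k)) j" unfolding it_def by (rule Fpow_ge)
  finally show ?thesis by simp
qed

lemma qs_mono: "i \<le> k \<Longrightarrow> qs i j \<le> qs k j"
proof (induction k)
  case 0 then show ?case by simp
next
  case (Suc k)
  then show ?case using qs_step[of k j] by (cases "i = Suc k") auto
qed

lemma st_0: "st k 0 = dv (qs k)" unfolding st_def by simp
lemma st_K: "st k K = qs (Suc k)" unfolding st_def by (simp add: it_def)
lemma st_Suc: "st k (Suc l) = F (st k l)" unfolding st_def by simp
lemma st_mono: "l \<le> l' \<Longrightarrow> st k l j \<le> st k l' j" unfolding st_def by (rule Fpow_mono)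
lemma st_ge: "qs k j \<le> st k l j"
  using dv_ge[of "qs k" j] st_mono[of 0 l k j] st_0 by simp
lemma st_le_next: "l \<le> K \<Longrightarrow> st k l j \<le> qs (Suc k) j"
  using st_mono[of l K k j] st_K by simp

lemma A_Suc: "A (Suc k) \<longleftrightarrow> A k \<and> Succ k"
  unfolding A_def using less_Suc_eq by auto

lemma man_B:
  assumes "md" "stb \<nu>" "\<And>w. (x0,w) \<in> \<nu> \<Longrightarrow> w \<notin> xk ` {..<k}"
  shows "below (qs k) \<nu>"
  using assms(3)
proof (induction k)
  case 0 then show ?case using below_q0[OF assms(2)] by simp
next
  case (Suc k)
  have b: "below (qs k) \<nu>"
  proof (rule Suc.IH)
    fix w assume "(x0,w) \<in> \<nu>"
    then have "w \<notin> xk ` {..<Suc k}" by (rule Suc.prems)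
    then show "w \<notin> xk ` {..<k}" by auto
  qed
  have "pos (PM (dm (qs k))) w \<noteq> qs k (dm (qs k))" if w: "(dm (qs k), w) \<in> \<nu>" for w
  proof
    assume eq: "pos (PM (dm (qs k))) w = qs k (dm (qs k))"
    have x: "dm (qs k) = x0" using dm_man[OF assms(1)] by simp
    have wr: "w < n+r" "x0 < n" using stb_range[OF assms(2)] w x by auto
    have "xk k = w" unfolding xk_def tgt_def using x eq nth_pos[OF wr(2,1)] by simp
    then show False using Suc.prems[of w] w x by auto
  qed
  then show ?case using G[OF assms(2) b] by simp
qed

lemma man_A:
  assumes "md" "Suc k \<le> card (stable_partners_man n r PM PW x0)"
  shows "A k"
  unfolding A_def
proof (intro allI impI)
  fix i assume i: "i < k"
  let ?S = "stable_partners_man n r PM PW x0"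
  have fin: "finite ?S" using assms(2) card.infinite by fastforce
  have "card (xk ` {..<Suc i}) \<le> Suc i" using card_image_le by (metis card_lessThan finite_lessThan)
  then have "\<not> ?S \<subseteq> xk ` {..<Suc i}" using assms(2) i card_mono[of "xk ` {..<Suc i}" ?S] by force
  then obtain w \<nu> where w: "stb \<nu>" "(x0,w) \<in> \<nu>" "w \<notin> xk ` {..<Suc i}"
    unfolding stable_partners_man_def stb_def by blast
  have uq: "\<And>w'. (x0,w') \<in> \<nu> \<Longrightarrow> w' = w" using stb_uw[OF w(1) w(2)] by simp
  have b: "below (qs i) \<nu>"
  proof (rule man_B[OF assms(1) w(1)])
    fix w' assume "(x0,w') \<in> \<nu>"
    then show "w' \<notin> xk ` {..<i}" using uq w(3) by auto
  qed
  have "pos (PM (dm (qs i))) w' \<noteq> qs i (dm (qs i))" if w': "(dm (qs i), w') \<in> \<nu>" for w'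
  proof
    assume eq: "pos (PM (dm (qs i))) w' = qs i (dm (qs i))"
    have x: "dm (qs i) = x0" using dm_man[OF assms(1)] by simp
    have wr: "w' < n+r" "x0 < n" using stb_range[OF w(1)] w' x by auto
    have "xk i = w'" unfolding xk_def tgt_def using x eq nth_pos[OF wr(2,1)] by simp
    then show False using uq[of w'] w' x w(3) by auto
  qed
  then show "Succ i" using G[OF w(1) b] by simp
qed

definition Str :: "(nat \<Rightarrow> nat) \<Rightarrow> bool" where
  "Str q \<longleftrightarrow> (\<forall>j<n. q j < n+r) \<and> F q = q \<and> (\<forall>u\<in>U. R q u = {})"

lemma U_ne: "U \<noteq> {}" using card_U r1 by auto

lemma A_str: "A k \<Longrightarrow> Str (qs k)"
proof (induction k)
  case 0 then show ?case unfolding Str_def using q0_lt q0_fix unfolding U_def by simp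
next
  case (Suc k)
  then have Ak: "A k" and Sk: "Succ k" using A_Suc by auto
  have IH: "Str (qs k)" using Suc.IH Ak by simp
  have fx: "F (qs (Suc k)) = qs (Suc k)"
    unfolding qs.simps
  proof (rule it_fix)
    fix j assume "j < n"
    then show "dv (qs k) j \<le> n+r" using dv_le[of "qs k" j] IH unfolding Str_def by fastforce
  qed
  have RU: "\<forall>u\<in>U. R (qs (Suc k)) u = {}" using Sk unfolding Succ_def by simp
  have "qs (Suc k) j < n+r" if j: "j < n" for j
  proof (rule ccontr)
    assume "\<not> qs (Suc k) j < n+r"
    obtain u where u: "u \<in> U" using U_ne by blast
    have ur: "u < n+r" using u U_sub by auto
    have "pos (PM j) u \<le> qs (Suc k) j" using pos_lt[OF j ur] \<open>\<not> _\<close> by simp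
    then have "j \<in> R (qs (Suc k)) u" using Pre_iff[OF j ur] j unfolding R_def by simp
    then show False using RU u by blast
  qed
  then show ?case unfolding Str_def using fx RU by blast
qed

lemma Str_tgt_nonU: "Str q \<Longrightarrow> j < n \<Longrightarrow> tgt q j \<notin> U"
  unfolding Str_def R_def using tgt_Pre by blast

lemma Str_img: "Str q \<Longrightarrow> tgt q ` {..<n} = {..<n+r} - U"
proof -
  assume s: "Str q"
  have inj: "inj_on (tgt q) {..<n}" using tgt_inj s unfolding Str_def by blast
  have sub: "tgt q ` {..<n} \<subseteq> {..<n+r} - U" using Str_tgt_nonU[OF s] tgt_lt s unfolding Str_def by blast
  have "card (tgt q ` {..<n}) = n" using card_image[OF inj] by simp
  then show ?thesis using card_nonU sub by (intro card_seteq) auto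
qed

lemma Str_covers: "Str q \<Longrightarrow> w < n+r \<Longrightarrow> w \<notin> U \<Longrightarrow> \<exists>j<n. tgt q j = w"
proof -
  assume a: "Str q" "w < n+r" "w \<notin> U"
  then have "w \<in> tgt q ` {..<n}" using Str_img[OF a(1)] by simp
  then show ?thesis by auto
qed

lemma woman_step:
  assumes "\<not> md" "A k" "stb \<nu>" "(i,x0) \<in> \<nu>"
    "\<And>j. (j,x0) \<in> \<nu> \<Longrightarrow> j \<notin> (\<lambda>i. dm (qs i)) ` {..<Suc k}"
    "below (qs k) \<nu>"
  shows "below (qs (Suc k)) \<nu> \<and> Succ k"
proof -
  have s: "Str (qs k)" using A_str[OF assms(2)] .
  have x: "x0 < n+r" "x0 \<notin> U" using stb_range[OF assms(3,4)] U_unmatched[OF assms(3) _, of x0 i] assms(4) by auto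
  obtain j where "j < n" "tgt (qs k) j = x0" using Str_covers[OF s x] by blast
  then have "\<exists>j<n. qs k j < n+r \<and> tgt (qs k) j = x0" using s unfolding Str_def by blast
  then have d: "qs k (dm (qs k)) < n+r" "tgt (qs k) (dm (qs k)) = x0" using dm_tgt[OF assms(1)] by blast+
  have "pos (PM (dm (qs k))) w \<noteq> qs k (dm (qs k))" if w: "(dm (qs k), w) \<in> \<nu>" for w
  proof
    assume eq: "pos (PM (dm (qs k))) w = qs k (dm (qs k))"
    have wr: "w < n+r" using stb_range[OF assms(3) w] by simp
    have "w = x0" using d(2) eq nth_pos[OF dm_lt[of "qs k"] wr] unfolding tgt_def by simp
    then show False using assms(5)[of "dm (qs k)"] w by auto
  qed
  then show ?thesis using G[OF assms(3,6)] by simp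
qed

lemma woman_B:
  assumes "\<not> md" "A k" "stb \<nu>" "(i,x0) \<in> \<nu>"
    "\<And>j. (j,x0) \<in> \<nu> \<Longrightarrow> j \<notin> (\<lambda>i. dm (qs i)) ` {..<k}"
  shows "below (qs k) \<nu>"
  using assms(2,5)
proof (induction k)
  case 0 then show ?case using below_q0[OF assms(3)] by simp
next
  case (Suc k)
  have Ak: "A k" using Suc.prems(1) A_Suc by simp
  have "below (qs k) \<nu>"
  proof (rule Suc.IH[OF Ak])
    fix j assume "(j,x0) \<in> \<nu>"
    then have "j \<notin> (\<lambda>i. dm (qs i)) ` {..<Suc k}" by (rule Suc.prems(2))
    then show "j \<notin> (\<lambda>i. dm (qs i)) ` {..<k}" by auto
  qed
  then show ?case using woman_step[OF assms(1) Ak assms(3,4) Suc.prems(2)] by blast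
qed

lemma woman_A:
  assumes "\<not> md" "Suc k \<le> card (stable_partners_woman n r PM PW x0)"
  shows "A k"
  using assms(2)
proof (induction k)
  case 0 then show ?case unfolding A_def by simp
next
  case (Suc k)
  let ?S = "stable_partners_woman n r PM PW x0"
  let ?Y = "(\<lambda>i. dm (qs i)) ` {..<Suc k}"
  have Ak: "A k" using Suc by simp
  have fin: "finite ?S" using Suc.prems card.infinite by fastforce
  have "card ?Y \<le> Suc k" using card_image_le by (metis card_lessThan finite_lessThan)
  then have "\<not> ?S \<subseteq> ?Y" using Suc.prems card_mono[of ?Y ?S] by force
  then obtain j \<nu> where j: "stb \<nu>" "(j,x0) \<in> \<nu>" "j \<notin> ?Y"
    unfolding stable_partners_woman_def stb_def by blast
  have uq: "\<And>j'. (j',x0) \<in> \<nu> \<Longrightarrow> j' = j" using stb_um[OF j(1) j(2)] by simp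
  have b: "below (qs k) \<nu>"
  proof (rule woman_B[OF assms(1) Ak j(1,2)])
    fix j' assume "(j',x0) \<in> \<nu>"
    then show "j' \<notin> (\<lambda>i. dm (qs i)) ` {..<k}" using uq j(3) by auto
  qed
  have "Succ k" using woman_step[OF assms(1) Ak j(1,2) _ b] uq j(3) by blast
  then show ?case using Ak A_Suc by simp
qed

end


context mkt_ok begin

lemma xk_props:
  assumes "A k"
  shows "xk k < n+r" "xk k \<notin> U" "qs k (dm (qs k)) < n+r"
proof -
  have s: "Str (qs k)" using A_str[OF assms] .
  show "qs k (dm (qs k)) < n+r" using s dm_lt unfolding Str_def by blast
  then show "xk k < n+r" unfolding xk_def using tgt_lt dm_lt by blast
  show "xk k \<notin> U" unfolding xk_def using Str_tgt_nonU[OF s dm_lt] .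
qed

lemma hit_target:
  assumes "Succ k" "Hit k l j"
  shows "tgt (st k l) j = xk k"
proof (rule ccontr)
  assume ne: "tgt (st k l) j \<noteq> xk k"
  have h: "l \<le> K" "j < n" "st k l j < n+r" "tgt (st k l) j \<in> insert (xk k) U"
    using assms(2) unfolding Hit_def by auto
  then have u: "tgt (st k l) j \<in> U" using ne by simp
  have "tgt (st k l) j \<in> Pre (st k l) j" using tgt_Pre h by blast
  also have "\<dots> \<subseteq> Pre (qs (Suc k)) j" using Pre_mono[OF h(2)] st_le_next[OF h(1)] by blast
  finally have "j \<in> R (qs (Suc k)) (tgt (st k l) j)" using h(2) unfolding R_def by simp
  then show False using assms(1) u unfolding Succ_def by blast
qed

lemma hit_exists:
  assumes "A k" "Succ k"
  shows "\<exists>l j. Hit k l j"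
proof (rule ccontr)
  assume nh: "\<not> (\<exists>l j. Hit k l j)"
  have A1: "A (Suc k)" using assms A_Suc by simp
  have s1: "Str (qs (Suc k))" using A_str[OF A1] .
  have s0: "Str (qs k)" using A_str[OF assms(1)] .
  let ?d = "dm (qs k)"
  let ?q = "qs (Suc k)"
  have x: "xk k < n+r" "xk k \<notin> U" using xk_props[OF assms(1)] by auto
  have sub: "tgt ?q ` {..<n} \<subseteq> {..<n+r} - U - {xk k}"
  proof
    fix w assume "w \<in> tgt ?q ` {..<n}"
    then obtain j where j: "j < n" "w = tgt ?q j" by auto
    have qj: "?q j < n+r" using s1 j(1) unfolding Str_def by blast
    have wr: "w < n+r" "w \<notin> U" using tgt_lt[of j ?q, OF j(1) qj] Str_tgt_nonU[OF s1 j(1)] j(2) by auto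
    have "w \<noteq> xk k"
    proof (cases "?q j = qs k j")
      case True
      have "dv (qs k) ?d \<le> ?q ?d" unfolding qs.simps it_def by (rule Fpow_ge)
      then have "j \<noteq> ?d" using True dv_dm[of "qs k"] by auto
      moreover have "inj_on (tgt (qs k)) {..<n}" using tgt_inj s0 unfolding Str_def by blast
      ultimately have "tgt (qs k) j \<noteq> tgt (qs k) ?d" using j(1) dm_lt unfolding inj_on_def by blast
      then show ?thesis using j(2) True unfolding xk_def tgt_def by simp
    next
      case False
      then have lt: "qs k j < st k K j" using qs_step[of k j] st_K by simp
      show ?thesis
      proof
        assume "w = xk k"
        then have "Hit k K j" unfolding Hit_def using lt j qj st_K by simp
        then show False using nh by blast
      qed
    qed
    then show "w \<in> {..<n+r} - U - {xk k}" using wr by simp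
  qed
  have inj: "inj_on (tgt ?q) {..<n}" using tgt_inj s1 unfolding Str_def by blast
  have "n = card (tgt ?q ` {..<n})" using card_image[OF inj] by simp
  also have "\<dots> \<le> card ({..<n+r} - U - {xk k})" using sub by (intro card_mono) auto
  also have "\<dots> = n - 1" using card_nonU x by simp
  finally show False using n1 by simp
qed

lemma first_hit:
  assumes "\<exists>l j. Hit k l j"
  shows "Hit k (tH k) (jH k)" "\<And>l j. l < tH k \<Longrightarrow> \<not> Hit k l j" "\<And>j. j < jH k \<Longrightarrow> \<not> Hit k (tH k) j"
proof -
  have h1: "\<exists>j. Hit k (tH k) j" unfolding tH_def using LeastI_ex[where P="\<lambda>l. \<exists>j. Hit k l j"] assms by blast
  then show "Hit k (tH k) (jH k)" unfolding jH_def by (rule LeastI_ex)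
  show "\<And>l j. l < tH k \<Longrightarrow> \<not> Hit k l j" unfolding tH_def using not_less_Least by blast
  show "\<And>j. j < jH k \<Longrightarrow> \<not> Hit k (tH k) j" unfolding jH_def using not_less_Least by blast
qed

lemma A_Suc_E: "A (Suc k) \<Longrightarrow> A k \<and> E k"
proof -
  assume a: "A (Suc k)"
  then have Ak: "A k" and Sk: "Succ k" using A_Suc by auto
  have ex: "\<exists>l j. Hit k l j" using hit_exists[OF Ak Sk] .
  have "tgt (st k (tH k)) (jH k) = xk k" using hit_target[OF Sk first_hit(1)[OF ex]] .
  then show ?thesis unfolding E_def using Ak ex by simp
qed

lemma st0_le: "st k 0 j \<le> Suc (qs k j)" using st_0 dv_le by simp

lemma st_step_le: "st k (Suc l) j \<le> Suc (st k l j)" using st_Suc F_le by simp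

lemma visit:
  assumes "qs k j < c" "c \<le> st k l j"
  shows "\<exists>l'\<le>l. st k l' j = c"
  using assms(2)
proof (induction l)
  case 0 then show ?case using st0_le[of k j] assms(1) by auto
next
  case (Suc l)
  show ?case
  proof (cases "c \<le> st k l j")
    case True
    then obtain l' where "l' \<le> l" "st k l' j = c" using Suc.IH by blast
    then show ?thesis using le_SucI by blast
  next
    case False
    then have "c = st k (Suc l) j" using Suc.prems st_step_le[of k l j] by simp
    then show ?thesis by auto
  qed
qed

lemma hitdata:
  assumes "A k" "E k"
  defines "t \<equiv> tH k" and "j \<equiv> jH k"
  shows "j < n" "t \<le> K" "qs k j < st k t j" "st k t j < n+r" "PM j ! st k t j = xk k"
    "0 < t \<Longrightarrow> st k (t - 1) j < st k t j"
    "\<And>u. u \<in> U \<Longrightarrow> st k t j < pos (PM j) u"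
proof -
  have ex: "\<exists>l j. Hit k l j" using assms(2) unfolding E_def by blast
  have H: "Hit k t j" using first_hit(1)[OF ex] unfolding t_def j_def .
  then show j: "j < n" and tK: "t \<le> K" and lt: "qs k j < st k t j" and ltn: "st k t j < n+r"
    unfolding Hit_def by auto
  show tg: "PM j ! st k t j = xk k" using assms(2) unfolding E_def tgt_def t_def j_def by simp
  show "st k (t - 1) j < st k t j" if tp: "0 < t"
  proof (rule ccontr)
    assume "\<not> st k (t - 1) j < st k t j"
    then have eq: "st k (t - 1) j = st k t j" using st_mono[of "t - 1" t k j] by simp
    have "Hit k (t - 1) j" using H eq tK unfolding Hit_def tgt_def by simp
    then show False using first_hit(2)[OF ex, of "t - 1" j] tp unfolding t_def by simp
  qed
  show "st k t j < pos (PM j) u" if u: "u \<in> U" for u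
  proof (rule ccontr)
    assume "\<not> st k t j < pos (PM j) u"
    then have le: "pos (PM j) u \<le> st k t j" by simp
    have ur: "u < n+r" using u U_sub by auto
    have "pos (PM j) u \<noteq> st k t j"
    proof
      assume "pos (PM j) u = st k t j"
      then have "u = xk k" using tg nth_pos[OF j ur] by simp
      then show False using xk_props(2)[OF assms(1)] u by simp
    qed
    then have lt2: "pos (PM j) u < st k t j" using le by simp
    show False
    proof (cases "pos (PM j) u \<le> qs k j")
      case True
      then have "j \<in> R (qs k) u" using Pre_iff[OF j ur] j unfolding R_def by simp
      then show False using A_str[OF assms(1)] u unfolding Str_def by blast
    next
      case False
      have "0 < t"
      proof (rule ccontr)
        assume "\<not> 0 < t"
        then have "st k t j \<le> Suc (qs k j)" using st0_le by simp
        then show False using False lt2 by simp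
      qed
      have "st k (t - 1) j \<ge> pos (PM j) u"
      proof (rule ccontr)
        assume "\<not> pos (PM j) u \<le> st k (t - 1) j"
        then have "st k t j \<le> Suc (pos (PM j) u) - 1 + 1" using st_step_le[of k "t - 1" j] \<open>0 < t\<close> by simp
        then show False using lt2 \<open>\<not> pos (PM j) u \<le> st k (t - 1) j\<close> st_step_le[of k "t - 1" j] \<open>0 < t\<close> by simp
      qed
      then obtain l' where l': "l' \<le> t - 1" "st k l' j = pos (PM j) u"
        using visit[of k j "pos (PM j) u" "t - 1"] False by auto
      have "Hit k l' j" unfolding Hit_def using l' tK j False pos_lt[OF j ur] nth_pos[OF j ur] u
        unfolding tgt_def by auto
      then show False using first_hit(2)[OF ex, of l' j] l' \<open>0 < t\<close> unfolding t_def by simp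
    qed
  qed
qed

end


locale agree =
  fixes n r :: nat and PM PW :: "nat \<Rightarrow> nat list" and md :: bool and x0 :: nat
    and PM' :: "nat \<Rightarrow> nat list" and j a :: nat
  assumes ok: "mkt_ok n r PM PW md x0"
    and ok': "mkt_ok n r PM' PW md x0"
    and oth: "\<And>i. i \<noteq> j \<Longrightarrow> PM' i = PM i"
    and pre: "\<And>c. c < a \<Longrightarrow> PM' j ! c = PM j ! c"
    and jn: "j < n"
begin

sublocale M: mkt_ok n r PM PW md x0 by (rule ok)
sublocale M': mkt_ok n r PM' PW md x0 by (rule ok')

lemma take_eq: "c \<le> a \<Longrightarrow> take c (PM' j) = take c (PM j)"
  by (rule nth_equalityI) (auto simp: M.PM_len[OF jn] M'.PM_len[OF jn] pre)

lemma Pre_eq: "q j < a \<Longrightarrow> M'.Pre q i = M.Pre q i"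
  unfolding M.Pre_def M'.Pre_def using take_eq[of "Suc (q j)"] oth[of i] by (cases "i = j") auto

lemma R_eq: "q j < a \<Longrightarrow> M'.R q w = M.R q w"
  unfolding M.R_def M'.R_def using Pre_eq by simp

lemma tgt_eq: "q j < a \<Longrightarrow> M'.tgt q i = M.tgt q i"
  unfolding M.tgt_def M'.tgt_def using pre oth[of i] by (cases "i = j") auto

lemma rej_eq: "q j < a \<Longrightarrow> M'.rej q i = M.rej q i"
  unfolding M.rej_def M'.rej_def using R_eq tgt_eq by simp

lemma F_eq: "q j < a \<Longrightarrow> M'.F q = M.F q"
  unfolding M.F_def M'.F_def using rej_eq by simp

lemma dm_eq: "q j < a \<Longrightarrow> M'.dm q = M.dm q"
proof -
  assume h: "q j < a"
  have e: "M'.tgt q = M.tgt q" by (rule ext) (rule tgt_eq[of q, OF h])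
  show ?thesis unfolding M.dm_def M'.dm_def e by (rule refl)
qed

lemma dv_eq: "q j < a \<Longrightarrow> M'.dv q = M.dv q"
  unfolding M.dv_def M'.dv_def using dm_eq by simp

lemma K_eq: "M'.K = M.K" unfolding M.K_def M'.K_def by simp

lemma Fpow_eq: "(M.F ^^ l) q j < a \<Longrightarrow> (M'.F ^^ Suc l) q = (M.F ^^ Suc l) q"
proof (induction l)
  case 0 then show ?case using F_eq by simp
next
  case (Suc l)
  have "(M.F ^^ l) q j < a" using Suc.prems M.Fpow_mono[of l "Suc l" q j] by simp
  then have IH: "(M'.F ^^ Suc l) q = (M.F ^^ Suc l) q" by (rule Suc.IH)
  have "(M'.F ^^ Suc (Suc l)) q = M'.F ((M'.F ^^ Suc l) q)" by simp
  also have "\<dots> = M'.F ((M.F ^^ Suc l) q)" using IH by simp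
  also have "\<dots> = M.F ((M.F ^^ Suc l) q)" using F_eq Suc.prems by simp
  finally show ?case by simp
qed

lemma Fpow_eq': "(\<forall>l'<l. (M.F ^^ l') q j < a) \<Longrightarrow> (M'.F ^^ l) q = (M.F ^^ l) q"
proof (cases l)
  case 0 then show ?thesis by simp
next
  case (Suc m)
  assume "\<forall>l'<l. (M.F ^^ l') q j < a"
  then have "(M.F ^^ m) q j < a" using Suc by simp
  then show ?thesis using Fpow_eq Suc by simp
qed

lemma it_eq: "M.it q j < a \<Longrightarrow> M'.it q = M.it q"
proof -
  assume h: "M.it q j < a"
  have "(M.F ^^ (n*(n+r))) q j \<le> M.it q j" unfolding M.it_def M.K_def by (rule M.Fpow_mono) simp
  then have "(M'.F ^^ Suc (n*(n+r))) q = (M.F ^^ Suc (n*(n+r))) q" using h Fpow_eq by simp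
  then show ?thesis unfolding M.it_def M'.it_def M.K_def M'.K_def by simp
qed

lemma q0_eq: "M.q0 j < a \<Longrightarrow> M'.q0 = M.q0"
  unfolding M.q0_def M'.q0_def using it_eq by simp

lemma U_eq: "M.q0 j < a \<Longrightarrow> M'.U = M.U"
  unfolding M.U_def M'.U_def using q0_eq R_eq by simp

lemma qs_eq: "M.qs k j < a \<Longrightarrow> i \<le> k \<Longrightarrow> M'.qs i = M.qs i"
proof (induction k arbitrary: i)
  case 0 then show ?case using q0_eq by simp
next
  case (Suc k)
  have k: "M.qs k j < a" using Suc.prems(1) M.qs_step[of k j] by simp
  show ?case
  proof (cases "i = Suc k")
    case False then show ?thesis using Suc.IH[OF k] Suc.prems(2) by simp
  next
    case True
    have e: "M'.qs k = M.qs k" using Suc.IH[OF k] by simp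
    have "M'.qs (Suc k) = M'.it (M'.dv (M.qs k))" using e by simp
    also have "\<dots> = M'.it (M.dv (M.qs k))" using dv_eq k by simp
    also have "\<dots> = M.it (M.dv (M.qs k))" using it_eq Suc.prems(1) by simp
    finally show ?thesis using True by simp
  qed
qed

lemma xk_eq: "M.qs k j < a \<Longrightarrow> M'.xk k = M.xk k"
  unfolding M.xk_def M'.xk_def using qs_eq[of k k] dm_eq tgt_eq by simp

lemma q0_le: "M.q0 j \<le> M.qs k j" using M.qs_mono[of 0 k j] by simp

lemma A_eq: "M.qs k j < a \<Longrightarrow> M'.A k = M.A k"
proof -
  assume h: "M.qs k j < a"
  have U: "M'.U = M.U" using U_eq q0_le h le_less_trans by blast
  have "M'.Succ i = M.Succ i" if i: "i < k" for i
  proof -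
    have "M.qs (Suc i) j < a" using M.qs_mono[of "Suc i" k j] i h by simp
    then show ?thesis unfolding M.Succ_def M'.Succ_def using U qs_eq[OF h, of "Suc i"] i R_eq by simp
  qed
  then show ?thesis unfolding M.A_def M'.A_def by simp
qed

lemma st_eq:
  assumes "M.qs k j < a" "\<forall>l'<l. M.st k l' j < a"
  shows "M'.st k l = M.st k l"
proof -
  have e: "M'.qs k = M.qs k" using qs_eq[OF assms(1)] by simp
  have d: "M'.dv (M.qs k) = M.dv (M.qs k)" using dv_eq assms(1) by simp
  have "(M'.F ^^ l) (M.dv (M.qs k)) = (M.F ^^ l) (M.dv (M.qs k))"
  proof (rule Fpow_eq')
    show "\<forall>l'<l. (M.F ^^ l') (M.dv (M.qs k)) j < a" using assms(2) unfolding M.st_def by simp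
  qed
  then show ?thesis unfolding M.st_def M'.st_def using e d by simp
qed

end


definition swp :: "nat list \<Rightarrow> nat \<Rightarrow> nat \<Rightarrow> nat list" where
  "swp xs a b = xs[a := xs ! b, b := xs ! a]"

lemma swp_len[simp]: "length (swp xs a b) = length xs" unfolding swp_def by simp

lemma swp_nth: "a < length xs \<Longrightarrow> b < length xs \<Longrightarrow> a \<noteq> b \<Longrightarrow>
   swp xs a b ! c = (if c = a then xs ! b else if c = b then xs ! a else xs ! c)"
  unfolding swp_def by (auto simp: nth_list_update)

lemma swp_invol: "a < length xs \<Longrightarrow> b < length xs \<Longrightarrow> a \<noteq> b \<Longrightarrow> swp (swp xs a b) a b = xs"
  by (rule nth_equalityI) (auto simp: swp_nth)

lemma swp_perm: "xs \<in> permutations_of_set S \<Longrightarrow> a < length xs \<Longrightarrow> b < length xs \<Longrightarrow>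
   swp xs a b \<in> permutations_of_set S"
  unfolding swp_def permutations_of_set_def by simp

context mkt_ok begin

definition swPM :: "nat \<Rightarrow> nat \<Rightarrow> nat \<Rightarrow> nat list" where
  "swPM k u = PM(jH k := swp (PM (jH k)) (st k (tH k) (jH k)) (pos (PM (jH k)) u))"

lemma sw_basic:
  assumes "A k" "E k" "u \<in> U"
  defines "j \<equiv> jH k" and "a \<equiv> st k (tH k) (jH k)" and "b \<equiv> pos (PM (jH k)) u"
  shows "j < n" "a < b" "b < n+r" "a < n+r" "PM j ! b = u"
proof -
  show j: "j < n" using hitdata(1)[OF assms(1,2)] unfolding j_def .
  show "a < b" using hitdata(7)[OF assms(1,2,3)] unfolding a_def b_def .
  have ur: "u < n+r" using assms(3) U_sub by auto
  show "b < n+r" unfolding b_def using pos_lt[OF j[unfolded j_def] ur] .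
  show "a < n+r" using hitdata(4)[OF assms(1,2)] unfolding a_def .
  show "PM j ! b = u" unfolding j_def b_def using nth_pos[OF j[unfolded j_def] ur] .
qed

lemma sw_ok:
  assumes "A k" "E k" "u \<in> U"
  shows "mkt_ok n r (swPM k u) PW md x0"
proof
  show "n \<ge> 1" "r \<ge> 1" using n1 r1 by auto
  show "\<forall>w<n+r. PW w \<in> permutations_of_set {..<n}" using PWp by simp
  show "md \<longrightarrow> x0 < n" using mdx by simp
  show "\<forall>i<n. swPM k u i \<in> permutations_of_set {..<n+r}"
  proof (intro allI impI)
    fix i assume i: "i < n"
    show "swPM k u i \<in> permutations_of_set {..<n+r}"
    proof (cases "i = jH k")
      case True
      have "swp (PM (jH k)) (st k (tH k) (jH k)) (pos (PM (jH k)) u) \<in> permutations_of_set {..<n+r}"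
        using swp_perm PMp sw_basic[OF assms] PM_len by simp
      then show ?thesis unfolding swPM_def using True by simp
    next
      case False then show ?thesis unfolding swPM_def using PMp i by simp
    qed
  qed
qed

lemma sw_agree:
  assumes "A k" "E k" "u \<in> U"
  shows "agree n r PM PW md x0 (swPM k u) (jH k) (st k (tH k) (jH k))"
proof (rule agree.intro)
  show "mkt_ok n r PM PW md x0" by (rule mkt_ok_axioms)
  show "mkt_ok n r (swPM k u) PW md x0" by (rule sw_ok[OF assms])
  show "\<And>i. i \<noteq> jH k \<Longrightarrow> swPM k u i = PM i" unfolding swPM_def by simp
  show "jH k < n" using sw_basic[OF assms] by simp
  show "\<And>c. c < st k (tH k) (jH k) \<Longrightarrow> swPM k u (jH k) ! c = PM (jH k) ! c"
    unfolding swPM_def using sw_basic[OF assms] PM_len by (simp add: swp_nth)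
qed

end


context mkt_ok begin

lemma sw_props:
  assumes "A k" "E k" "u \<in> U"
  shows "mkt.A n r (swPM k u) PW md x0 k"
    "\<not> mkt.Succ n r (swPM k u) PW md x0 k"
    "mkt.tH n r (swPM k u) PW md x0 k = tH k"
    "mkt.jH n r (swPM k u) PW md x0 k = jH k"
    "mkt.st n r (swPM k u) PW md x0 k (tH k) (jH k) = st k (tH k) (jH k)"
    "mkt.xk n r (swPM k u) PW md x0 k = xk k"
    "mkt.U n r (swPM k u) PW = U"
    "swPM k u (jH k) ! st k (tH k) (jH k) = u"
proof -
  interpret G: agree n r PM PW md x0 "swPM k u" "jH k" "st k (tH k) (jH k)"
    by (rule sw_agree[OF assms])
  define t where "t = tH k"
  define j where "j = jH k"
  define a where "a = st k t j"
  have ex: "\<exists>l j. Hit k l j" using assms(2) unfolding E_def by blast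
  have hq: "qs k j < a" using hitdata(3)[OF assms(1,2)] unfolding a_def t_def j_def .
  have j: "j < n" using hitdata(1)[OF assms(1,2)] unfolding j_def .
  have tK: "t \<le> K" using hitdata(2)[OF assms(1,2)] unfolding t_def .
  have an: "a < n+r" using hitdata(4)[OF assms(1,2)] unfolding a_def t_def j_def .
  have hq': "qs k (jH k) < st k (tH k) (jH k)" using hq unfolding a_def t_def j_def .
  show Aeq: "G.M'.A k" using G.A_eq[OF hq'] assms(1) by simp
  have Ueq: "G.M'.U = U"
    using G.U_eq G.q0_le[of k] hq' by (meson le_less_trans)
  then show "G.M'.U = U" .
  have xeq: "G.M'.xk k = xk k" using G.xk_eq[OF hq'] .
  then show "G.M'.xk k = xk k" .
  have qseq: "G.M'.qs k = qs k" using G.qs_eq[OF hq', of k] by simp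
  have steq: "G.M'.st k l = st k l" if l: "l \<le> t" for l
  proof (rule G.st_eq[OF hq'])
    show "\<forall>l'<l. st k l' (jH k) < st k (tH k) (jH k)"
    proof (intro allI impI)
      fix l' assume l': "l' < l"
      then have tp: "0 < t" using l by simp
      have "st k l' j \<le> st k (t - 1) j" using st_mono l' l by simp
      also have "\<dots> < st k t j" using hitdata(6)[OF assms(1,2)] tp unfolding t_def j_def by simp
      finally show "st k l' (jH k) < st k (tH k) (jH k)" unfolding t_def j_def .
    qed
  qed
  show "G.M'.st k (tH k) (jH k) = st k (tH k) (jH k)" using steq[of t] unfolding t_def by simp
  have b: "a < pos (PM j) u" "pos (PM j) u < n+r" "PM j ! pos (PM j) u = u"
    using sw_basic[OF assms] unfolding a_def t_def j_def by auto
  have swj: "swPM k u j ! a = u"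
    unfolding swPM_def j_def a_def t_def using b PM_len[OF j] swp_nth
    by (simp add: j_def a_def t_def)
  then show "swPM k u (jH k) ! st k (tH k) (jH k) = u" unfolding j_def a_def t_def .
  have Keq: "G.M'.K = K" using G.K_eq .
  have Hit': "G.M'.Hit k t j"
    unfolding G.M'.Hit_def using tK Keq j qseq steq[of t] hq an swj Ueq xeq assms(3)
    unfolding G.M'.tgt_def a_def by simp
  have noH1: "\<not> G.M'.Hit k l i" if l: "l < t" for l i
  proof
    assume H: "G.M'.Hit k l i"
    have "st k l j \<le> st k (t - 1) j" using st_mono l by simp
    also have "\<dots> < a" using hitdata(6)[OF assms(1,2)] l unfolding a_def t_def j_def by simp
    finally have lj: "st k l j < a" .
    have "G.M'.tgt (st k l) i = tgt (st k l) i" using G.tgt_eq[of "st k l"] lj unfolding j_def a_def t_def by simp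
    then have "Hit k l i" using H steq[of l] l qseq Keq xeq Ueq unfolding G.M'.Hit_def Hit_def by simp
    then show False using first_hit(2)[OF ex] l unfolding t_def by blast
  qed
  have noH2: "\<not> G.M'.Hit k t i" if i: "i < j" for i
  proof
    assume H: "G.M'.Hit k t i"
    have "swPM k u i = PM i" using i unfolding swPM_def j_def by simp
    then have "G.M'.tgt (st k t) i = tgt (st k t) i" unfolding G.M'.tgt_def tgt_def by simp
    then have "Hit k t i" using H steq[of t] qseq Keq xeq Ueq unfolding G.M'.Hit_def Hit_def by simp
    then show False using first_hit(3)[OF ex] i unfolding t_def j_def by blast
  qed
  have tH': "G.M'.tH k = t"
    unfolding G.M'.tH_def
  proof (rule Least_equality)
    show "\<exists>j. G.M'.Hit k t j" using Hit' by blast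
    fix l assume "\<exists>j. G.M'.Hit k l j"
    then show "t \<le> l" using noH1 not_le by blast
  qed
  then show "G.M'.tH k = tH k" unfolding t_def .
  have jH': "G.M'.jH k = j"
    unfolding G.M'.jH_def tH'
  proof (rule Least_equality)
    show "G.M'.Hit k t j" by (rule Hit')
    fix i assume "G.M'.Hit k t i"
    then show "j \<le> i" using noH2 not_le by blast
  qed
  then show "G.M'.jH k = jH k" unfolding j_def .
  show "\<not> G.M'.Succ k"
  proof
    assume S: "G.M'.Succ k"
    have "j < n" "G.M'.st k t j < n+r" using j steq[of t] an unfolding a_def by auto
    then have "G.M'.tgt (G.M'.st k t) j \<in> G.M'.Pre (G.M'.st k t) j" by (rule G.M'.tgt_Pre)
    also have "\<dots> \<subseteq> G.M'.Pre (G.M'.qs (Suc k)) j"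
      using G.M'.Pre_mono[OF j] G.M'.st_le_next[of t k j] tK Keq by simp
    finally have "j \<in> G.M'.R (G.M'.qs (Suc k)) u"
      using swj steq[of t] j unfolding G.M'.R_def G.M'.tgt_def a_def by simp
    then show False using S assms(3) Ueq unfolding G.M'.Succ_def by blast
  qed
qed

end


context mkt_ok begin

lemma sw_recover:
  assumes "A k" "E k" "u \<in> U"
  defines "P' \<equiv> swPM k u"
  defines "j' \<equiv> mkt.jH n r P' PW md x0 k"
  defines "a' \<equiv> mkt.st n r P' PW md x0 k (mkt.tH n r P' PW md x0 k) j'"
  defines "x' \<equiv> mkt.xk n r P' PW md x0 k"
  shows "P' j' ! a' = u" "P'(j' := swp (P' j') a' (pos (P' j') x')) = PM"
proof -
  have j': "j' = jH k" using sw_props(4)[OF assms(1-3)] unfolding j'_def P'_def .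
  have a': "a' = st k (tH k) (jH k)" using sw_props(3,5)[OF assms(1-3)] j' unfolding a'_def P'_def by simp
  have x': "x' = xk k" using sw_props(6)[OF assms(1-3)] unfolding x'_def P'_def .
  show "P' j' ! a' = u" using sw_props(8)[OF assms(1-3)] j' a' unfolding P'_def by simp
  define j where "j = jH k"
  define a where "a = st k (tH k) (jH k)"
  define b where "b = pos (PM (jH k)) u"
  have bs: "j < n" "a < b" "b < n+r" "a < n+r" "PM j ! b = u"
    using sw_basic[OF assms(1-3)] unfolding j_def a_def b_def by auto
  have P'j: "P' j = swp (PM j) a b" unfolding P'_def swPM_def j_def a_def b_def by simp
  have len: "length (PM j) = n+r" using PM_len[OF bs(1)] .
  have "P' j ! b = PM j ! a" using P'j swp_nth[of a "PM j" b b] bs len by simp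
  also have "\<dots> = xk k" using hitdata(5)[OF assms(1,2)] unfolding a_def j_def .
  finally have "P' j ! b = xk k" .
  moreover have "distinct (P' j)" using mkt_ok.PM_dist[OF sw_ok[OF assms(1-3)] bs(1)]
    unfolding P'_def .
  ultimately have pb: "pos (P' j) (xk k) = b" using pos_nth[of "P' j" b] P'j bs len by simp
  have "swp (P' j) a b = PM j" using P'j swp_invol[of a "PM j" b] bs len by simp
  then have "P'(j := swp (P' j) a b) = PM" unfolding P'_def swPM_def j_def a_def b_def by auto
  then show "P'(j' := swp (P' j') a' (pos (P' j') x')) = PM"
    using j' a' x' pb unfolding j_def a_def by simp
qed

end

context
  fixes n r :: nat and md :: bool and x0 :: nat
  assumes n1: "n \<ge> 1" and r1: "r \<ge> 1" and mdx: "md \<longrightarrow> x0 < n"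
begin

lemma prof_ok: "P \<in> profiles n r \<Longrightarrow> mkt_ok n r (fst P) (snd P) md x0"
proof -
  assume P: "P \<in> profiles n r"
  show ?thesis
  proof
    show "n \<ge> 1" "r \<ge> 1" "md \<longrightarrow> x0 < n" using n1 r1 mdx by auto
    show "\<forall>j<n. fst P j \<in> permutations_of_set {..<n+r}" using P unfolding profiles_def by (auto simp: PiE_iff)
    show "\<forall>w<n+r. snd P w \<in> permutations_of_set {..<n}" using P unfolding profiles_def by (auto simp: PiE_iff)
  qed
qed

definition AS :: "nat \<Rightarrow> ((nat \<Rightarrow> nat list) \<times> (nat \<Rightarrow> nat list)) set" where
  "AS k = {P \<in> profiles n r. mkt.A n r (fst P) (snd P) md x0 k}"
definition DS :: "nat \<Rightarrow> ((nat \<Rightarrow> nat list) \<times> (nat \<Rightarrow> nat list)) set" where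
  "DS k = {P \<in> profiles n r. mkt.A n r (fst P) (snd P) md x0 k \<and> mkt.E n r (fst P) (snd P) md x0 k}"
definition phi where
  "phi k = (\<lambda>(P,u). (mkt_ok.swPM n r (fst P) (snd P) md x0 k u, snd P))"
definition recv where
  "recv k P' = (let PM' = fst P'; PW = snd P'; j = mkt.jH n r PM' PW md x0 k;
      a = mkt.st n r PM' PW md x0 k (mkt.tH n r PM' PW md x0 k) j
    in ((PM'(j := swp (PM' j) a (pos (PM' j) (mkt.xk n r PM' PW md x0 k))), PW), PM' j ! a))"


lemma phi_props:
  assumes "P \<in> DS k" "u \<in> mkt.U n r (fst P) (snd P)"
  shows "phi k (P,u) \<in> AS k - AS (Suc k)" "recv k (phi k (P,u)) = (P,u)"
proof -
  interpret M: mkt_ok n r "fst P" "snd P" md x0 using prof_ok assms(1) unfolding DS_def by blast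
  have AE: "M.A k" "M.E k" using assms(1) unfolding DS_def by auto
  have Pp: "P \<in> profiles n r" using assms(1) unfolding DS_def by auto
  let ?P' = "M.swPM k u"
  have inP: "(?P', snd P) \<in> profiles n r"
  proof -
    have ok': "mkt_ok n r ?P' (snd P) md x0" using M.sw_ok[OF AE assms(2)] .
    have j: "M.jH k < n" using M.sw_basic(1)[OF AE assms(2)] .
    have "?P' \<in> PiE {..<n} (\<lambda>_. permutations_of_set {..<n+r})"
    proof (rule PiE_I)
      fix i assume "i \<in> {..<n}"
      then show "?P' i \<in> permutations_of_set {..<n+r}" using mkt_ok.PMp[OF ok'] by simp
    next
      fix i assume i: "i \<notin> {..<n}"
      then have "?P' i = fst P i" unfolding M.swPM_def using j by auto
      then show "?P' i = undefined" using Pp i unfolding profiles_def by (auto simp: PiE_iff extensional_def)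
    qed
    then show ?thesis using Pp unfolding profiles_def by auto
  qed
  have "mkt.A n r ?P' (snd P) md x0 k" "\<not> mkt.Succ n r ?P' (snd P) md x0 k"
    using M.sw_props(1,2)[OF AE assms(2)] by auto
  then have "\<not> mkt.A n r ?P' (snd P) md x0 (Suc k)" "mkt.A n r ?P' (snd P) md x0 k"
    unfolding mkt.A_def by auto
  then show "phi k (P,u) \<in> AS k - AS (Suc k)" unfolding phi_def AS_def using inP by simp
  show "recv k (phi k (P,u)) = (P,u)"
    using M.sw_recover[OF AE assms(2)] unfolding recv_def phi_def Let_def by simp
qed

lemma card_step: "(r+1) * card (AS (Suc k)) \<le> card (AS k)"
proof -
  let ?S = "Sigma (DS k) (\<lambda>P. mkt.U n r (fst P) (snd P))"
  have finP: "finite (profiles n r)" unfolding profiles_def by (intro finite_cartesian_product finite_PiE) auto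
  have finD: "finite (DS k)" using finP unfolding DS_def by simp
  have finA: "finite (AS k)" using finP unfolding AS_def by simp
  have cU: "card (mkt.U n r (fst P) (snd P)) = r" if "P \<in> DS k" for P
    using mkt_ok.card_U[OF prof_ok] that unfolding DS_def by blast
  have finU: "finite (mkt.U n r (fst P) (snd P))" if "P \<in> DS k" for P
    using cU[OF that] r1 card.infinite by fastforce
  have fU: "\<forall>P\<in>DS k. finite (mkt.U n r (fst P) (snd P))" using finU by blast
  have "card ?S = (\<Sum>P\<in>DS k. card (mkt.U n r (fst P) (snd P)))"
    by (rule card_SigmaI[OF finD fU])
  then have cS: "card ?S = r * card (DS k)" using cU by simp
  have inj: "inj_on (phi k) ?S"
  proof (rule inj_onI)
    fix x y assume x: "x \<in> ?S" and y: "y \<in> ?S" and eq: "phi k x = phi k y"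
    obtain P u where xe: "x = (P,u)" by (cases x) blast
    obtain P2 u2 where ye: "y = (P2,u2)" by (cases y) blast
    have 1: "recv k (phi k (P,u)) = (P,u)" using x xe by (intro phi_props(2)) auto
    have 2: "recv k (phi k (P2,u2)) = (P2,u2)" using y ye by (intro phi_props(2)) auto
    show "x = y" using 1 2 eq xe ye by metis
  qed
  have sub: "phi k ` ?S \<subseteq> AS k - AS (Suc k)"
  proof
    fix z assume "z \<in> phi k ` ?S"
    then obtain P u where "P \<in> DS k" "u \<in> mkt.U n r (fst P) (snd P)" "z = phi k (P,u)" by blast
    then show "z \<in> AS k - AS (Suc k)" using phi_props(1) by blast
  qed
  have "r * card (DS k) = card (phi k ` ?S)" using cS card_image[OF inj] by simp
  also have "\<dots> \<le> card (AS k - AS (Suc k))" using sub finA by (intro card_mono) auto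
  also have "\<dots> = card (AS k) - card (AS (Suc k))"
  proof -
    have "AS (Suc k) \<subseteq> AS k" unfolding AS_def mkt.A_def by auto
    then show ?thesis using finA by (simp add: card_Diff_subset finite_subset)
  qed
  finally have 1: "r * card (DS k) \<le> card (AS k) - card (AS (Suc k))" .
  have "AS (Suc k) \<subseteq> DS k"
  proof
    fix P assume P: "P \<in> AS (Suc k)"
    interpret M: mkt_ok n r "fst P" "snd P" md x0 using prof_ok P unfolding AS_def by blast
    show "P \<in> DS k" using M.A_Suc_E P unfolding AS_def DS_def by auto
  qed
  then have "card (AS (Suc k)) \<le> card (DS k)" using finD by (intro card_mono) auto
  moreover have "card (AS (Suc k)) \<le> card (AS k)"
    using finA by (intro card_mono) (auto simp: AS_def mkt.A_def)
  ultimately have "r * card (AS (Suc k)) \<le> card (AS k) - card (AS (Suc k))" "card (AS (Suc k)) \<le> card (AS k)"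
    using 1 mult_le_mono2[of "card (AS (Suc k))" "card (DS k)" r] by linarith+
  then show ?thesis by (simp add: algebra_simps)
qed

end


lemma profiles_finite: "finite (profiles n r)"
  unfolding profiles_def by (intro finite_cartesian_product finite_PiE) auto

lemma profiles_ne: "profiles n r \<noteq> {}"
proof -
  obtain xs where "set xs = {..<n+r}" "distinct xs" using finite_distinct_list[of "{..<n+r}"] by auto
  then have 1: "permutations_of_set {..<n+r} \<noteq> {}" unfolding permutations_of_set_def by auto
  obtain ys where "set ys = {..<n}" "distinct ys" using finite_distinct_list[of "{..<n}"] by auto
  then have 2: "permutations_of_set {..<n} \<noteq> {}" unfolding permutations_of_set_def by auto
  show ?thesis unfolding profiles_def using 1 2 by (simp add: PiE_eq_empty_iff)
qed

lemma count_sum: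
  fixes N :: "'a \<Rightarrow> nat"
  assumes "finite S" "\<And>P. P \<in> S \<Longrightarrow> N P \<le> B"
  shows "(\<Sum>P\<in>S. N P) = (\<Sum>k<B. card {P\<in>S. Suc k \<le> N P})"
proof -
  have "N P = (\<Sum>k<B. if Suc k \<le> N P then 1 else 0)" if P: "P \<in> S" for P
  proof -
    have "(\<Sum>k<B. if Suc k \<le> N P then 1 else (0::nat)) = card ({..<B} \<inter> {k. Suc k \<le> N P})"
      by (simp add: sum.If_cases)
    also have "{..<B} \<inter> {k. Suc k \<le> N P} = {..<N P}" using assms(2)[OF P] by auto
    finally show ?thesis by simp
  qed
  then have "(\<Sum>P\<in>S. N P) = (\<Sum>P\<in>S. \<Sum>k<B. if Suc k \<le> N P then 1 else 0)" by simp
  also have "\<dots> = (\<Sum>k<B. \<Sum>P\<in>S. if Suc k \<le> N P then 1 else 0)" by (rule sum.swap)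
  also have "\<dots> = (\<Sum>k<B. card {P\<in>S. Suc k \<le> N P})"
    using assms(1) by (simp add: sum.If_cases Collect_conj_eq Int_commute)
  finally show ?thesis .
qed

context
  fixes n r :: nat and md :: bool and x0 :: nat
  assumes n1: "n \<ge> 1" and r1: "r \<ge> 1" and mdx: "md \<longrightarrow> x0 < n"
begin

lemma AS0: "AS n r md x0 0 = profiles n r"
  unfolding AS_def[OF n1 r1 mdx] mkt.A_def by auto

lemma card_AS: "card (AS n r md x0 k) * (r+1)^k \<le> card (profiles n r)"
proof (induction k)
  case 0 then show ?case using AS0 by simp
next
  case (Suc k)
  have "card (AS n r md x0 (Suc k)) * (r+1)^(Suc k) = ((r+1) * card (AS n r md x0 (Suc k))) * (r+1)^k"
    by (simp add: algebra_simps)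
  also have "\<dots> \<le> card (AS n r md x0 k) * (r+1)^k"
    using card_step[OF n1 r1 mdx, of k] by (intro mult_le_mono1)
  finally show ?case using Suc by simp
qed

lemma card_AS_real: "real (card (AS n r md x0 k)) \<le> real (card (profiles n r)) * (1 / (real r + 1))^k"
proof -
  have h: "card (AS n r md x0 k) * (r+1)^k \<le> card (profiles n r)" by (rule card_AS)
  have "real (card (AS n r md x0 k) * (r+1)^k) \<le> real (card (profiles n r))"
    using h by (simp only: of_nat_le_iff)
  then have "real (card (AS n r md x0 k)) * (real r + 1)^k \<le> real (card (profiles n r))" by (simp add: add.commute)
  moreover have "(real r + 1)^k > 0" by simp
  ultimately show ?thesis by (simp add: field_simps power_divide)
qed

lemma final:
  fixes N :: "((nat \<Rightarrow> nat list) \<times> (nat \<Rightarrow> nat list)) \<Rightarrow> nat"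
  assumes bnd: "\<And>P. P \<in> profiles n r \<Longrightarrow> N P \<le> B"
    and inA: "\<And>P k. P \<in> profiles n r \<Longrightarrow> Suc k \<le> N P \<Longrightarrow> P \<in> AS n r md x0 k"
  shows "real (card {P \<in> profiles n r. N P > 1}) / real (card (profiles n r)) \<le> 1 / (real r + 1)"
    "(\<Sum>P\<in>profiles n r. real (N P)) / real (card (profiles n r)) \<le> 1 + 1 / real r"
proof -
  let ?c = "real (card (profiles n r))"
  have cpos: "?c > 0" using profiles_finite profiles_ne by (simp add: card_gt_0_iff)
  have "{P \<in> profiles n r. N P > 1} \<subseteq> AS n r md x0 1" using inA[of _ 1] by auto
  then have "card {P \<in> profiles n r. N P > 1} \<le> card (AS n r md x0 1)"
    using profiles_finite unfolding AS_def[OF n1 r1 mdx] by (intro card_mono) auto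
  then have "real (card {P \<in> profiles n r. N P > 1}) \<le> ?c * (1 / (real r + 1))"
    using card_AS_real[of 1] by simp
  then show "real (card {P \<in> profiles n r. N P > 1}) / ?c \<le> 1 / (real r + 1)"
    using cpos by (simp add: field_simps)
  have "(\<Sum>P\<in>profiles n r. real (N P)) = real (\<Sum>P\<in>profiles n r. N P)" by simp
  also have "\<dots> = real (\<Sum>k<B. card {P\<in>profiles n r. Suc k \<le> N P})"
    using count_sum[OF profiles_finite bnd] by simp
  also have "\<dots> = (\<Sum>k<B. real (card {P\<in>profiles n r. Suc k \<le> N P}))" by simp
  also have "\<dots> \<le> (\<Sum>k<B. ?c * (1 / (real r + 1))^k)"
  proof (rule sum_mono)
    fix k assume "k \<in> {..<B}"
    have "{P\<in>profiles n r. Suc k \<le> N P} \<subseteq> AS n r md x0 k" using inA by auto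
    then have "card {P\<in>profiles n r. Suc k \<le> N P} \<le> card (AS n r md x0 k)"
      using profiles_finite unfolding AS_def[OF n1 r1 mdx] by (intro card_mono) auto
    then show "real (card {P\<in>profiles n r. Suc k \<le> N P}) \<le> ?c * (1 / (real r + 1))^k"
      using card_AS_real[of k] by linarith
  qed
  also have "\<dots> = ?c * (\<Sum>k<B. (1 / (real r + 1))^k)" by (simp add: sum_distrib_left)
  also have "\<dots> \<le> ?c * (1 / (1 - 1 / (real r + 1)))"
  proof -
    have "(\<Sum>k<B. (1 / (real r + 1))^k) < 1 / (1 - 1 / (real r + 1))"
      using r1 by (intro geometric_sum_less) auto
    then show ?thesis using cpos by (intro mult_left_mono) auto
  qed
  also have "1 / (1 - 1 / (real r + 1)) = 1 + 1 / real r" using r1 by (simp add: field_simps)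
  finally show "(\<Sum>P\<in>profiles n r. real (N P)) / ?c \<le> 1 + 1 / real r"
    using cpos by (simp add: field_simps)
qed

end

lemma sp_man_bound:
  "card (stable_partners_man n r PM PW m) \<le> n+r"
proof -
  have "stable_partners_man n r PM PW m \<subseteq> {..<n+r}"
    unfolding stable_partners_man_def stable_def matching_def by auto
  then show ?thesis using card_mono[of "{..<n+r}"] by fastforce
qed

lemma sp_woman_bound:
  "card (stable_partners_woman n r PM PW w) \<le> n+r"
proof -
  have "stable_partners_woman n r PM PW w \<subseteq> {..<n+r}"
    unfolding stable_partners_woman_def stable_def matching_def by auto
  then show ?thesis using card_mono[of "{..<n+r}"] by fastforce
qed

theorem lemmaA3:
  fixes n r :: nat
  assumes "n \<ge> 1" and "r \<ge> 1"
  shows "(\<forall>m<n.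
            real (card {P \<in> profiles n r. card (stable_partners_man n r (fst P) (snd P) m) > 1})
              / real (card (profiles n r)) \<le> 1 / (real r + 1)
          \<and> (\<Sum>P\<in>profiles n r. real (card (stable_partners_man n r (fst P) (snd P) m)))
              / real (card (profiles n r)) \<le> 1 + 1 / real r)
       \<and> (\<forall>w<n+r.
            real (card {P \<in> profiles n r. card (stable_partners_woman n r (fst P) (snd P) w) > 1})
              / real (card (profiles n r)) \<le> 1 / (real r + 1)
          \<and> (\<Sum>P\<in>profiles n r. real (card (stable_partners_woman n r (fst P) (snd P) w)))
              / real (card (profiles n r)) \<le> 1 + 1 / real r)"
proof (intro conjI allI impI)
  fix m assume m: "m < n"
  have mdx: "True \<longrightarrow> m < n" using m by simp
  have inA: "P \<in> AS n r True m k" if "P \<in> profiles n r" "Suc k \<le> card (stable_partners_man n r (fst P) (snd P) m)" for P k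
  proof -
    interpret M: mkt_ok n r "fst P" "snd P" True m using prof_ok[OF assms mdx] that(1) by blast
    show ?thesis using M.man_A[OF _ that(2)] that(1) unfolding AS_def[OF assms mdx] by simp
  qed
  note f = final[OF assms mdx, of "\<lambda>P. card (stable_partners_man n r (fst P) (snd P) m)" "n+r", OF sp_man_bound inA]
  show "real (card {P \<in> profiles n r. card (stable_partners_man n r (fst P) (snd P) m) > 1})
              / real (card (profiles n r)) \<le> 1 / (real r + 1)" using f(1) .
  show "(\<Sum>P\<in>profiles n r. real (card (stable_partners_man n r (fst P) (snd P) m)))
              / real (card (profiles n r)) \<le> 1 + 1 / real r" using f(2) .
next
  fix w assume w: "w < n+r"
  have mdx: "False \<longrightarrow> w < n" by simp
  have inA: "P \<in> AS n r False w k" if "P \<in> profiles n r" "Suc k \<le> card (stable_partners_woman n r (fst P) (snd P) w)" for P k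
  proof -
    interpret M: mkt_ok n r "fst P" "snd P" False w using prof_ok[OF assms mdx] that(1) by blast
    show ?thesis using M.woman_A[OF _ that(2)] that(1) unfolding AS_def[OF assms mdx] by simp
  qed
  note f = final[OF assms mdx, of "\<lambda>P. card (stable_partners_woman n r (fst P) (snd P) w)" "n+r", OF sp_woman_bound inA]
  show "real (card {P \<in> profiles n r. card (stable_partners_woman n r (fst P) (snd P) w) > 1})
              / real (card (profiles n r)) \<le> 1 / (real r + 1)" using f(1) .
  show "(\<Sum>P\<in>profiles n r. real (card (stable_partners_woman n r (fst P) (snd P) w)))
              / real (card (profiles n r)) \<le> 1 + 1 / real r" using f(2) .
qed


end
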